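(* Assume Case 4 holds with index $k$. Let $(A,B)=(n_{k-1},m_{k-1})$ and for $n\ge1$ put $(A_n,B_n)=(\gamma_n-(\gamma-A)d^{n-1},\ Bd^{n-1})$ and $(A_n^*,B_n^* )=\big((\delta^{n-1}+\delta^{n-2}B+\cdots+B^{n-1})A,\ B^n\big)$. (i) If $\delta<T_{k-1}$, then for every $n\ge1$, $(A_n,B_n)$ is the vertex of $N(Q^n)$ immediately preceding $(\gamma_n,d^n)$ (in order of increasing $x$-coordinate), the segment joining them has slope $-l_1^{-1}$, and $\delta^n$ is strictly smaller than the $y$-intercept of the line through these two points. (ii) If $\delta=T_{k-1}$, then for every $n\ge1$, $(A_n^*,B_n^* )$ is the vertex of $N(Q^n)$ immediately preceding $(\gamma_n,d^n)$, the segment joining them has slope $-l_1^{-1}$, and $\delta^n$ equals the $y$-intercept of the line through these two points.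
   Context: Let $f(z,w)=(p(z),q(z,w))$ be a holomorphic skew product germ at the origin of $\mathbb{C}^2$ with $f(0,0)=(0,0)$, where $p(z)=a_\delta z^\delta+O(z^{\delta+1})$ with $a_\delta\neq0$ and integer $\delta\ge1$, and $q(z,w)=\sum_{i+j\ge1}b_{ij}z^iw^j$ is not identically zero. For $n\ge1$ write $f^n=(p^n,Q^n)$. The Newton polygon $N(g)$ of a nonzero germ $g=\sum g_{ij}z^iw^j$ is the convex hull of $\bigcup_{g_{ij}\neq0}\{(x,y):x\ge i,\ y\ge j\}$. Let $(n_1,m_1),\dots,(n_s,m_s)$ be the vertices of $N(q)$ with $n_1<\cdots<n_s$, $m_1>\cdots>m_s$; for $1\le k\le s-1$ let $T_k$ be the $y$-intercept of the line through $(n_k,m_k)$ and $(n_{k+1},m_{k+1})$. Case 4 means: $s>2$ and $T_k\le\delta\le T_{k-1}$ for some $2\le k\le s-1$; for this $k$ set $(\gamma,d)=(n_k,m_k)$, $l_1=\frac{n_k-n_{k-1}}{m_{k-1}-m_k}$ and $l_2$ defined by $l_1+l_2=\frac{n_{k+1}-n_k}{m_k-m_{k+1}}$. Define $\gamma_n=\gamma(\delta^{n-1}+\delta^{n-2}d+\cdots+d^{n-1})$. *)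

theory Defs
  imports "HOL-Analysis.Analysis"
begin

text \<open>Bivariate power series (germs at the origin of C^2) are represented by their
  coefficient functions: g i j is the coefficient of z^i w^j.\<close>
type_synonym bser = "nat \<Rightarrow> nat \<Rightarrow> complex"

definition bmul :: "bser \<Rightarrow> bser \<Rightarrow> bser" where
  "bmul f g = (\<lambda>i j. \<Sum>a\<le>i. \<Sum>b\<le>j. f a b * g (i - a) (j - b))"

fun bpow :: "bser \<Rightarrow> nat \<Rightarrow> bser" where
  "bpow f 0 = (\<lambda>i j. if i = 0 \<and> j = 0 then 1 else 0)"
| "bpow f (Suc n) = bmul f (bpow f n)"

text \<open>Substitution g(P(z,w), R(z,w)) for series P, R without constant term:
  only the terms with a + b \<le> i + j can contribute to the coefficient of z^i w^j.\<close>
definition bsubst :: "bser \<Rightarrow> bser \<Rightarrow> bser \<Rightarrow> bser" where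
  "bsubst g P R = (\<lambda>i j. \<Sum>a\<le>i + j. \<Sum>b\<le>i + j - a.
       g a b * bmul (bpow P a) (bpow R b) i j)"

definition zser :: "(nat \<Rightarrow> complex) \<Rightarrow> bser" where
  "zser p = (\<lambda>i j. if j = 0 then p i else 0)"

text \<open>Iterates f^n = (p^n, Q^n) of the skew product f = (p, q), with f^(n+1) = f o f^n.\<close>
fun skew_iter :: "(nat \<Rightarrow> complex) \<Rightarrow> bser \<Rightarrow> nat \<Rightarrow> bser \<times> bser" where
  "skew_iter p q 0 = ((\<lambda>i j. if i = 1 \<and> j = 0 then 1 else 0),
                      (\<lambda>i j. if i = 0 \<and> j = 1 then 1 else 0))"
| "skew_iter p q (Suc n) =
     (case skew_iter p q n of (P, R) \<Rightarrow> (bsubst (zser p) P R, bsubst q P R))"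

definition conv_germ1 :: "(nat \<Rightarrow> complex) \<Rightarrow> bool" where
  "conv_germ1 p \<longleftrightarrow> (\<exists>r::real>0. \<forall>z::complex. norm z < r \<longrightarrow> summable (\<lambda>i. norm (p i * z ^ i)))"

definition conv_germ2 :: "bser \<Rightarrow> bool" where
  "conv_germ2 g \<longleftrightarrow> (\<exists>r::real>0. \<forall>z w::complex. norm z < r \<and> norm w < r \<longrightarrow>
      (\<lambda>(i, j). norm (g i j * z ^ i * w ^ j)) summable_on (UNIV :: (nat \<times> nat) set))"

definition newton_polygon :: "bser \<Rightarrow> (real \<times> real) set" where
  "newton_polygon g = convex hull
     (\<Union>{{(x, y). x \<ge> real i \<and> y \<ge> real j} | i j. g i j \<noteq> 0})"

definition y_intercept :: "real \<times> real \<Rightarrow> real \<times> real \<Rightarrow> real" where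
  "y_intercept u v = snd u - (snd v - snd u) / (fst v - fst u) * fst u"

definition slope :: "real \<times> real \<Rightarrow> real \<times> real \<Rightarrow> real" where
  "slope u v = (snd v - snd u) / (fst v - fst u)"

definition preceding_vertex :: "(real \<times> real) set \<Rightarrow> real \<times> real \<Rightarrow> real \<times> real \<Rightarrow> bool" where
  "preceding_vertex S u v \<longleftrightarrow> u extreme_point_of S \<and> v extreme_point_of S \<and> fst u < fst v \<and>
     (\<forall>w. w extreme_point_of S \<longrightarrow> \<not> (fst u < fst w \<and> fst w < fst v))"

end

theory Submission
  imports Defs
begin


lemma sum_single:
  assumes "finite S" "a \<in> S" "\<And>x. x \<in> S \<Longrightarrow> x \<noteq> a \<Longrightarrow> f x = (0::'b::comm_monoid_add)"
  shows "sum f S = f a"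
proof -
  have "sum f S = f a + sum f (S - {a})" using assms by (simp add: sum.remove)
  also have "sum f (S - {a}) = 0" using assms by (intro sum.neutral) auto
  finally show ?thesis by simp
qed

definition lin :: "real \<Rightarrow> real \<Rightarrow> nat \<Rightarrow> nat \<Rightarrow> real" where
  "lin c1 c2 i j = c1 * real i + c2 * real j"

definition supp_ge :: "real \<Rightarrow> real \<Rightarrow> real \<Rightarrow> bser \<Rightarrow> bool" where
  "supp_ge c1 c2 m g \<longleftrightarrow> (\<forall>i j. g i j \<noteq> 0 \<longrightarrow> m \<le> lin c1 c2 i j)"

definition tie :: "real \<Rightarrow> real \<Rightarrow> real \<Rightarrow> real \<Rightarrow> real \<Rightarrow> real \<Rightarrow> bser \<Rightarrow> bool" where
  "tie c1 c2 m e1 e2 t g \<longleftrightarrow> (\<forall>i j. g i j \<noteq> 0 \<longrightarrow> lin c1 c2 i j = m \<longrightarrow> t \<le> lin e1 e2 i j)"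

lemma lin_add: "lin c1 c2 (a + b) (c + d) = lin c1 c2 a c + lin c1 c2 b d"
  by (simp add: lin_def algebra_simps)

lemma lin_diff: "x \<le> i \<Longrightarrow> y \<le> j \<Longrightarrow> lin c1 c2 i j = lin c1 c2 x y + lin c1 c2 (i - x) (j - y)"
  by (simp add: lin_def of_nat_diff algebra_simps)

lemma bmul_nz:
  assumes "bmul g h i j \<noteq> 0"
  obtains x y where "x \<le> i" "y \<le> j" "g x y \<noteq> 0" "h (i - x) (j - y) \<noteq> 0"
proof -
  from assms obtain x where x: "x \<in> {..i}" "(\<Sum>b\<le>j. g x b * h (i - x) (j - b)) \<noteq> 0"
    unfolding bmul_def by (blast elim: sum.not_neutral_contains_not_neutral)
  then obtain y where "y \<in> {..j}" "g x y * h (i - x) (j - y) \<noteq> 0"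
    by (blast elim: sum.not_neutral_contains_not_neutral)
  with x that show ?thesis by auto
qed

lemma bmul_supp:
  assumes "supp_ge c1 c2 m g" "supp_ge c1 c2 m' h"
  shows "supp_ge c1 c2 (m + m') (bmul g h)"
  unfolding supp_ge_def
proof (intro allI impI)
  fix i j assume "bmul g h i j \<noteq> 0"
  then obtain x y where xy: "x \<le> i" "y \<le> j" "g x y \<noteq> 0" "h (i - x) (j - y) \<noteq> 0"
    by (rule bmul_nz)
  have "m \<le> lin c1 c2 x y" "m' \<le> lin c1 c2 (i-x) (j-y)" using assms xy unfolding supp_ge_def by auto
  then show "m + m' \<le> lin c1 c2 i j" using lin_diff[OF xy(1,2), of c1 c2] by linarith
qed

lemma bmul_tie:
  assumes "supp_ge c1 c2 m g" "supp_ge c1 c2 m' h" "tie c1 c2 m e1 e2 t g" "tie c1 c2 m' e1 e2 t' h"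
  shows "tie c1 c2 (m + m') e1 e2 (t + t') (bmul g h)"
  unfolding tie_def
proof (intro allI impI)
  fix i j assume nz: "bmul g h i j \<noteq> 0" and eq: "lin c1 c2 i j = m + m'"
  from nz obtain x y where xy: "x \<le> i" "y \<le> j" "g x y \<noteq> 0" "h (i - x) (j - y) \<noteq> 0"
    by (rule bmul_nz)
  have "m \<le> lin c1 c2 x y" "m' \<le> lin c1 c2 (i-x) (j-y)" using assms xy unfolding supp_ge_def by auto
  then have "lin c1 c2 x y = m" "lin c1 c2 (i-x) (j-y) = m'" using lin_diff[OF xy(1,2), of c1 c2] eq by linarith+
  then have "t \<le> lin e1 e2 x y" "t' \<le> lin e1 e2 (i-x) (j-y)" using assms xy unfolding tie_def by auto
  then show "t + t' \<le> lin e1 e2 i j" using lin_diff[OF xy(1,2), of e1 e2] by linarith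
qed

lemma lin_inj:
  assumes "c1 * e2 \<noteq> c2 * e1" "lin c1 c2 x y = lin c1 c2 a b" "lin e1 e2 x y = lin e1 e2 a b"
  shows "x = a \<and> y = b"
proof -
  let ?dx = "real x - real a" and ?dy = "real y - real b"
  have 1: "c1 * ?dx + c2 * ?dy = 0" "e1 * ?dx + e2 * ?dy = 0" using assms(2,3) by (simp_all add: lin_def algebra_simps)
  have "(c1 * e2 - c2 * e1) * ?dx = e2 * (c1 * ?dx + c2 * ?dy) - c2 * (e1 * ?dx + e2 * ?dy)" by algebra
  then have "?dx = 0" using 1 assms(1) by simp
  moreover have "(c1 * e2 - c2 * e1) * ?dy = c1 * (e1 * ?dx + e2 * ?dy) - e1 * (c1 * ?dx + c2 * ?dy)" by algebra
  then have "?dy = 0" using 1 assms(1) by simp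
  ultimately show ?thesis by simp
qed

lemma bmul_corner:
  assumes "supp_ge c1 c2 m g" "supp_ge c1 c2 m' h" "tie c1 c2 m e1 e2 t g" "tie c1 c2 m' e1 e2 t' h"
    and det: "c1 * e2 \<noteq> c2 * e1"
    and ab: "lin c1 c2 a b = m" "lin e1 e2 a b = t" and ab': "lin c1 c2 a' b' = m'" "lin e1 e2 a' b' = t'"
  shows "bmul g h (a + a') (b + b') = g a b * h a' b'"
proof -
  have zero: "g x y * h (a + a' - x) (b + b' - y) = 0" if "x \<le> a + a'" "y \<le> b + b'" "(x, y) \<noteq> (a, b)" for x y
  proof (rule ccontr)
    assume "g x y * h (a + a' - x) (b + b' - y) \<noteq> 0"
    then have nz: "g x y \<noteq> 0" "h (a + a' - x) (b + b' - y) \<noteq> 0" by auto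
    have "m \<le> lin c1 c2 x y" "m' \<le> lin c1 c2 (a+a'-x) (b+b'-y)" using assms(1,2) nz unfolding supp_ge_def by auto
    moreover have "lin c1 c2 (a+a') (b+b') = m + m'" using ab ab' lin_add by simp
    ultimately have e: "lin c1 c2 x y = m" "lin c1 c2 (a+a'-x) (b+b'-y) = m'" using lin_diff[OF that(1,2), of c1 c2] by linarith+
    then have "t \<le> lin e1 e2 x y" "t' \<le> lin e1 e2 (a+a'-x) (b+b'-y)" using assms(3,4) nz unfolding tie_def by auto
    moreover have "lin e1 e2 (a+a') (b+b') = t + t'" using ab ab' lin_add by simp
    ultimately have "lin e1 e2 x y = t" using lin_diff[OF that(1,2), of e1 e2] by linarith
    with e ab have "x = a \<and> y = b" using lin_inj[OF det] by metis
    with that(3) show False by simp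
  qed
  have "bmul g h (a + a') (b + b') = (\<Sum>y\<le>b + b'. g a y * h (a + a' - a) (b + b' - y))"
    unfolding bmul_def
    by (rule sum_single) (auto intro!: sum.neutral zero)
  also have "\<dots> = g a b * h (a + a' - a) (b + b' - b)"
    using zero[of a] by (intro sum_single) auto
  finally show ?thesis by simp
qed

lemma bpow_supp: "supp_ge c1 c2 m g \<Longrightarrow> supp_ge c1 c2 (real n * m) (bpow g n)"
proof (induction n)
  case 0 then show ?case by (simp add: supp_ge_def lin_def)
next
  case (Suc n)
  then have "supp_ge c1 c2 (m + real n * m) (bpow g (Suc n))" using bmul_supp by simp
  then show ?case by (simp add: algebra_simps)
qed

lemma bpow_tie: "supp_ge c1 c2 m g \<Longrightarrow> tie c1 c2 m e1 e2 t g \<Longrightarrow> tie c1 c2 (real n * m) e1 e2 (real n * t) (bpow g n)"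
proof (induction n)
  case 0 then show ?case by (simp add: tie_def lin_def)
next
  case (Suc n)
  then have "tie c1 c2 (m + real n * m) e1 e2 (t + real n * t) (bpow g (Suc n))"
    using bmul_tie bpow_supp by simp
  then show ?case by (simp add: algebra_simps)
qed

lemma bpow_corner:
  assumes "supp_ge c1 c2 m g" "tie c1 c2 m e1 e2 t g" "c1 * e2 \<noteq> c2 * e1"
    "lin c1 c2 a b = m" "lin e1 e2 a b = t"
  shows "bpow g n (n * a) (n * b) = g a b ^ n"
proof (induction n)
  case 0 then show ?case by simp
next
  case (Suc n)
  have e: "bpow g (Suc n) (Suc n * a) (Suc n * b) = bmul g (bpow g n) (a + n * a) (b + n * b)" by simp
  have "bmul g (bpow g n) (a + n * a) (b + n * b) = g a b * bpow g n (n * a) (n * b)"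
    by (rule bmul_corner[OF assms(1) bpow_supp[OF assms(1)] assms(2) bpow_tie[OF assms(1,2)] assms(3-5)])
       (simp_all add: lin_def assms(4,5)[symmetric] algebra_simps)
  then show ?case using Suc e by simp
qed



lemma dsum_nz:
  fixes N :: nat
  assumes "(\<Sum>a\<le>N. \<Sum>b\<le>N - a. f a b) \<noteq> (0::'c::comm_monoid_add)"
  obtains a b where "a \<le> N" "b \<le> N - a" "f a b \<noteq> 0"
proof -
  from assms obtain a where a: "a \<in> {..N}" "(\<Sum>b\<le>N - a. f a b) \<noteq> 0"
    by (blast elim: sum.not_neutral_contains_not_neutral)
  then obtain b where "b \<in> {..N-a}" "f a b \<noteq> 0"
    by (blast elim: sum.not_neutral_contains_not_neutral)
  with a that show ?thesis by auto
qed

lemma dsum_single: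
  fixes N a0 b0 :: nat
  assumes "a0 + b0 \<le> N" "\<And>a b. a \<le> N \<Longrightarrow> b \<le> N - a \<Longrightarrow> (a, b) \<noteq> (a0, b0) \<Longrightarrow> f a b = 0"
  shows "(\<Sum>a\<le>N. \<Sum>b\<le>N - a. f a b) = (f a0 b0 :: 'c::comm_monoid_add)"
proof -
  have "(\<Sum>a\<le>N. \<Sum>b\<le>N - a. f a b) = (\<Sum>b\<le>N - a0. f a0 b)"
    apply (rule sum_single)
      apply simp
    using assms(1) apply simp
    using assms(2) by (simp add: sum.neutral)
  also have "\<dots> = f a0 b0"
    using assms by (intro sum_single) auto
  finally show ?thesis .
qed

definition Pinv :: "nat \<Rightarrow> bser \<Rightarrow> bool" where
  "Pinv D P \<longleftrightarrow> (\<forall>i j. P i j \<noteq> 0 \<longrightarrow> j = 0 \<and> D \<le> i) \<and> P D 0 \<noteq> 0"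

definition Rinv :: "real \<Rightarrow> real \<Rightarrow> nat \<Rightarrow> nat \<Rightarrow> nat \<Rightarrow> nat \<Rightarrow> bser \<Rightarrow> bool" where
  "Rinv l \<mu> x0 y0 x1 y1 R \<longleftrightarrow> supp_ge l 1 \<mu> R \<and> tie l 1 \<mu> 1 0 (real x0) R \<and> tie l 1 \<mu> 0 1 (real y1) R
     \<and> R x0 y0 \<noteq> 0 \<and> R x1 y1 \<noteq> 0 \<and> lin l 1 x0 y0 = \<mu> \<and> lin l 1 x1 y1 = \<mu>"

lemma lin_mult: "lin c1 c2 (n * x) (n * y) = real n * lin c1 c2 x y"
  by (simp add: lin_def algebra_simps)

lemma X_facts:
  fixes a b :: nat
  assumes P: "Pinv D P" and R: "Rinv l \<mu> x0 y0 x1 y1 R" and l: "l > 0"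
  defines "X \<equiv> bmul (bpow P a) (bpow R b)"
  shows "supp_ge l 1 (real a * (l * real D) + real b * \<mu>) X"
    "tie l 1 (real a * (l * real D) + real b * \<mu>) 1 0 (real a * real D + real b * real x0) X"
    "tie l 1 (real a * (l * real D) + real b * \<mu>) 0 1 (real a * 0 + real b * real y1) X"
    "X (a * D + b * x0) (a * 0 + b * y0) = P D 0 ^ a * R x0 y0 ^ b"
    "X (a * D + b * x1) (a * 0 + b * y1) = P D 0 ^ a * R x1 y1 ^ b"
proof -
  have Ps: "supp_ge l 1 (l * real D) P" unfolding supp_ge_def lin_def
  proof (intro allI impI)
    fix i j assume "P i j \<noteq> 0"
    then have "j = 0" "D \<le> i" using P by (auto simp: Pinv_def)
    then show "l * real D \<le> l * real i + 1 * real j" using l by (simp add: mult_left_mono)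
  qed
  have Pt1: "tie l 1 (l * real D) 1 0 (real D) P" "tie l 1 (l * real D) 0 1 0 P"
    using P unfolding Pinv_def tie_def lin_def by auto
  have Rs: "supp_ge l 1 \<mu> R" and Rt: "tie l 1 \<mu> 1 0 (real x0) R" "tie l 1 \<mu> 0 1 (real y1) R"
    using R unfolding Rinv_def by auto
  note s1 = bpow_supp[OF Ps, of a] and s2 = bpow_supp[OF Rs, of b]
  show "supp_ge l 1 (real a * (l * real D) + real b * \<mu>) X" unfolding X_def by (rule bmul_supp[OF s1 s2])
  show "tie l 1 (real a * (l * real D) + real b * \<mu>) 1 0 (real a * real D + real b * real x0) X"
    unfolding X_def by (rule bmul_tie[OF s1 s2 bpow_tie[OF Ps Pt1(1)] bpow_tie[OF Rs Rt(1)]])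
  show "tie l 1 (real a * (l * real D) + real b * \<mu>) 0 1 (real a * 0 + real b * real y1) X"
    unfolding X_def by (rule bmul_tie[OF s1 s2 bpow_tie[OF Ps Pt1(2)] bpow_tie[OF Rs Rt(2)]])
  have lx0: "lin l 1 x0 y0 = \<mu>" "lin 1 0 x0 y0 = real x0" "lin l 1 x1 y1 = \<mu>" "lin 0 1 x1 y1 = real y1"
    using R unfolding Rinv_def lin_def by auto
  have c1: "bpow P a (a * D) (a * 0) = P D 0 ^ a"
    using l by (intro bpow_corner[OF Ps Pt1(1)]) (auto simp: lin_def)
  have c1': "bpow P a (a * D) (a * 0) = P D 0 ^ a"
    using l by (intro bpow_corner[OF Ps Pt1(2)]) (auto simp: lin_def)
  have c2: "bpow R b (b * x0) (b * y0) = R x0 y0 ^ b"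
    by (rule bpow_corner[OF Rs Rt(1)]) (use lx0 in auto)
  have c2': "bpow R b (b * x1) (b * y1) = R x1 y1 ^ b"
    using l by (intro bpow_corner[OF Rs Rt(2)]) (use lx0 in auto)
  show "X (a * D + b * x0) (a * 0 + b * y0) = P D 0 ^ a * R x0 y0 ^ b"
    unfolding X_def c1[symmetric] c2[symmetric]
    using l by (intro bmul_corner[OF s1 s2 bpow_tie[OF Ps Pt1(1)] bpow_tie[OF Rs Rt(1)]])
       (use lx0 in \<open>auto simp: lin_def algebra_simps\<close>)
  have lxb: "real b * (real y1 + l * real x1) = real b * (real y0 + l * real x0)"
    using R unfolding Rinv_def lin_def by (simp add: algebra_simps)
  show "X (a * D + b * x1) (a * 0 + b * y1) = P D 0 ^ a * R x1 y1 ^ b"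
    unfolding X_def c1'[symmetric] c2'[symmetric]
    using l by (intro bmul_corner[OF s1 s2 bpow_tie[OF Ps Pt1(2)] bpow_tie[OF Rs Rt(2)]])
       (simp_all only: lin_mult lx0, simp_all add: lin_def)
qed



lemma R_step:
  fixes a0 b0 a1 b1 :: nat
  assumes l: "l > 0" and D: "D \<ge> 1" and P: "Pinv D P" and R: "Rinv l \<mu> x0 y0 x1 y1 R" and mu: "\<mu> > 0"
    and qs: "\<And>a b. q a b \<noteq> 0 \<Longrightarrow> M \<le> real a * (l * real D) + real b * \<mu>"
    and ql: "\<And>a b. q a b \<noteq> 0 \<Longrightarrow> real a * (l * real D) + real b * \<mu> = M \<Longrightarrow>
               a0 * D + b0 * x0 \<le> a * D + b * x0 \<and> (a * D + b * x0 = a0 * D + b0 * x0 \<longrightarrow> a = a0 \<and> b = b0)"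
    and qr: "\<And>a b. q a b \<noteq> 0 \<Longrightarrow> real a * (l * real D) + real b * \<mu> = M \<Longrightarrow>
               b1 * y1 \<le> b * y1 \<and> (b * y1 = b1 * y1 \<longrightarrow> a = a1 \<and> b = b1)"
    and q0: "q a0 b0 \<noteq> 0" "real a0 * (l * real D) + real b0 * \<mu> = M"
    and q1: "q a1 b1 \<noteq> 0" "real a1 * (l * real D) + real b1 * \<mu> = M"
  shows "Rinv l M (a0 * D + b0 * x0) (b0 * y0) (a1 * D + b1 * x1) (b1 * y1) (bsubst q P R)"
proof -
  define X where "X a b = bmul (bpow P a) (bpow R b)" for a b
  note XF = X_facts[OF P R l, folded X_def]
  have exp: "bsubst q P R i j = (\<Sum>a\<le>i+j. \<Sum>b\<le>i+j-a. q a b * X a b i j)" for i j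
    by (simp add: bsubst_def X_def)
  have nzt: "\<exists>a b. q a b \<noteq> 0 \<and> X a b i j \<noteq> 0" if nz: "bsubst q P R i j \<noteq> 0" for i j
  proof -
    obtain a b where "q a b * X a b i j \<noteq> 0" using dsum_nz[OF nz[unfolded exp]] by blast
    then show ?thesis by auto
  qed
  have Xs: "real a * (l * real D) + real b * \<mu> \<le> lin l 1 i j" if "X a b i j \<noteq> 0" for a b i j
    using XF(1)[of a b] that unfolding supp_ge_def by blast
  have Xt1: "real a * real D + real b * real x0 \<le> real i"
    if "X a b i j \<noteq> 0" "lin l 1 i j = real a * (l * real D) + real b * \<mu>" for a b i j
    using XF(2)[of a b] that unfolding tie_def lin_def by auto
  have Xt2: "real b * real y1 \<le> real j"
    if "X a b i j \<noteq> 0" "lin l 1 i j = real a * (l * real D) + real b * \<mu>" for a b i j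
    using XF(3)[of a b] that unfolding tie_def lin_def by auto
  have Ro: "lin l 1 x0 y0 = \<mu>" "lin l 1 x1 y1 = \<mu>" "R x0 y0 \<noteq> 0" "R x1 y1 \<noteq> 0"
    using R unfolding Rinv_def by auto
  have PD: "P D 0 \<noteq> 0" using P unfolding Pinv_def by auto
  have supp: "supp_ge l 1 M (bsubst q P R)"
    unfolding supp_ge_def
  proof (intro allI impI)
    fix i j assume "bsubst q P R i j \<noteq> 0"
    then obtain a b where "q a b \<noteq> 0" "X a b i j \<noteq> 0" using nzt by blast
    then show "M \<le> lin l 1 i j" using qs Xs by fastforce
  qed
  have face: "q a b \<noteq> 0 \<and> X a b i j \<noteq> 0 \<and> real a * (l * real D) + real b * \<mu> = M"
    if "q a b \<noteq> 0" "X a b i j \<noteq> 0" "lin l 1 i j = M" for a b i j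
    using qs[OF that(1)] Xs[OF that(2)] that by auto
  have t1: "tie l 1 M 1 0 (real (a0 * D + b0 * x0)) (bsubst q P R)"
    unfolding tie_def
  proof (intro allI impI)
    fix i j assume "bsubst q P R i j \<noteq> 0" "lin l 1 i j = M"
    then obtain a b where ab: "q a b \<noteq> 0" "X a b i j \<noteq> 0" "real a * (l * real D) + real b * \<mu> = M"
      using nzt face by metis
    have "real a * real D + real b * real x0 \<le> real i" using Xt1 ab \<open>lin l 1 i j = M\<close> by auto
    moreover have "a0 * D + b0 * x0 \<le> a * D + b * x0" using ql ab by auto
    ultimately have "real (a0 * D + b0 * x0) \<le> real i"
      by (metis of_nat_le_iff of_nat_add of_nat_mult order_trans)
    then show "real (a0 * D + b0 * x0) \<le> lin 1 0 i j" unfolding lin_def by simp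
  qed
  have t2: "tie l 1 M 0 1 (real (b1 * y1)) (bsubst q P R)"
    unfolding tie_def
  proof (intro allI impI)
    fix i j assume "bsubst q P R i j \<noteq> 0" "lin l 1 i j = M"
    then obtain a b where ab: "q a b \<noteq> 0" "X a b i j \<noteq> 0" "real a * (l * real D) + real b * \<mu> = M"
      using nzt face by metis
    have "real b * real y1 \<le> real j" using Xt2 ab \<open>lin l 1 i j = M\<close> by auto
    moreover have "b1 * y1 \<le> b * y1" using qr ab by auto
    ultimately have "real (b1 * y1) \<le> real j"
      by (metis of_nat_le_iff of_nat_mult order_trans)
    then show "real (b1 * y1) \<le> lin 0 1 i j" unfolding lin_def by simp
  qed
  have lin0: "lin l 1 (a0 * D + b0 * x0) (b0 * y0) = M"
  proof -
    have "lin l 1 (a0 * D + b0 * x0) (b0 * y0) = real a0 * (l * real D) + real b0 * lin l 1 x0 y0"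
      by (simp add: lin_def algebra_simps)
    then show ?thesis using q0(2) Ro(1) by simp
  qed
  have lin1: "lin l 1 (a1 * D + b1 * x1) (b1 * y1) = M"
  proof -
    have "lin l 1 (a1 * D + b1 * x1) (b1 * y1) = real a1 * (l * real D) + real b1 * lin l 1 x1 y1"
      by (simp add: lin_def algebra_simps)
    then show ?thesis using q1(2) Ro(2) by simp
  qed
  have xy0: "1 \<le> x0 + y0"
  proof (rule ccontr)
    assume "\<not> 1 \<le> x0 + y0" then have "x0 = 0" "y0 = 0" by auto
    then show False using Ro(1) mu by (simp add: lin_def)
  qed
  have xy1: "1 \<le> x1 + y1"
  proof (rule ccontr)
    assume "\<not> 1 \<le> x1 + y1" then have "x1 = 0" "y1 = 0" by auto
    then show False using Ro(2) mu by (simp add: lin_def)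
  qed
  have c0: "bsubst q P R (a0 * D + b0 * x0) (b0 * y0) \<noteq> 0"
  proof -
    have zero: "q a b * X a b (a0 * D + b0 * x0) (b0 * y0) = 0" if "(a, b) \<noteq> (a0, b0)" for a b
    proof (rule ccontr)
      assume "q a b * X a b (a0 * D + b0 * x0) (b0 * y0) \<noteq> 0"
      then have ab: "q a b \<noteq> 0" "X a b (a0 * D + b0 * x0) (b0 * y0) \<noteq> 0" by auto
      then have L: "real a * (l * real D) + real b * \<mu> = M" using face lin0 by blast
      have "lin l 1 (a0 * D + b0 * x0) (b0 * y0) = real a * (l * real D) + real b * \<mu>" using lin0 L by simp
      from Xt1[OF ab(2) this] have "real a * real D + real b * real x0 \<le> real (a0 * D + b0 * x0)" .
      then have "a * D + b * x0 \<le> a0 * D + b0 * x0"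
        by (metis of_nat_le_iff of_nat_add of_nat_mult)
      then show False using ql[OF ab(1) L] that by auto
    qed
    have le: "a0 + b0 \<le> (a0 * D + b0 * x0) + b0 * y0"
    proof -
      have "a0 \<le> a0 * D" using D by (metis mult_1_right mult_le_mono2)
      moreover have "b0 \<le> b0 * (x0 + y0)" using xy0 by (metis mult_1_right mult_le_mono2)
      ultimately have "a0 + b0 \<le> a0 * D + b0 * (x0 + y0)" by (rule add_le_mono)
      then show ?thesis by (simp add: distrib_left add.assoc)
    qed
    have "bsubst q P R (a0 * D + b0 * x0) (b0 * y0) = q a0 b0 * X a0 b0 (a0 * D + b0 * x0) (b0 * y0)"
      unfolding exp by (rule dsum_single[OF le]) (use zero in auto)
    also have "X a0 b0 (a0 * D + b0 * x0) (b0 * y0) = P D 0 ^ a0 * R x0 y0 ^ b0"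
      using XF(4)[of a0 b0] by simp
    finally show ?thesis using q0(1) PD Ro(3) by simp
  qed
  have c1: "bsubst q P R (a1 * D + b1 * x1) (b1 * y1) \<noteq> 0"
  proof -
    have zero: "q a b * X a b (a1 * D + b1 * x1) (b1 * y1) = 0" if "(a, b) \<noteq> (a1, b1)" for a b
    proof (rule ccontr)
      assume "q a b * X a b (a1 * D + b1 * x1) (b1 * y1) \<noteq> 0"
      then have ab: "q a b \<noteq> 0" "X a b (a1 * D + b1 * x1) (b1 * y1) \<noteq> 0" by auto
      then have L: "real a * (l * real D) + real b * \<mu> = M" using face lin1 by blast
      have "lin l 1 (a1 * D + b1 * x1) (b1 * y1) = real a * (l * real D) + real b * \<mu>" using lin1 L by simp
      from Xt2[OF ab(2) this] have "real b * real y1 \<le> real (b1 * y1)" .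
      then have "b * y1 \<le> b1 * y1"
        by (metis of_nat_le_iff of_nat_mult)
      then show False using qr[OF ab(1) L] that by auto
    qed
    have le: "a1 + b1 \<le> (a1 * D + b1 * x1) + b1 * y1"
    proof -
      have "a1 \<le> a1 * D" using D by (metis mult_1_right mult_le_mono2)
      moreover have "b1 \<le> b1 * (x1 + y1)" using xy1 by (metis mult_1_right mult_le_mono2)
      ultimately have "a1 + b1 \<le> a1 * D + b1 * (x1 + y1)" by (rule add_le_mono)
      then show ?thesis by (simp add: distrib_left add.assoc)
    qed
    have "bsubst q P R (a1 * D + b1 * x1) (b1 * y1) = q a1 b1 * X a1 b1 (a1 * D + b1 * x1) (b1 * y1)"
      unfolding exp by (rule dsum_single[OF le]) (use zero in auto)
    also have "X a1 b1 (a1 * D + b1 * x1) (b1 * y1) = P D 0 ^ a1 * R x1 y1 ^ b1"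
      using XF(5)[of a1 b1] by simp
    finally show ?thesis using q1(1) PD Ro(4) by simp
  qed
  show ?thesis unfolding Rinv_def using supp t1 t2 c0 c1 lin0 lin1 by blast
qed



lemma bmul_one: "bmul g (bpow h 0) = g"
proof (intro ext)
  fix i j
  have "bmul g (bpow h 0) i j = (\<Sum>a\<le>i. \<Sum>b\<le>j. if a = i \<and> b = j then g a b else 0)"
    unfolding bmul_def by (intro sum.cong refl) auto
  also have "\<dots> = (\<Sum>b\<le>j. if i = i \<and> b = j then g i b else 0)"
    by (rule sum_single) (auto intro!: sum.neutral)
  also have "\<dots> = g i j"
    by simp
  finally show "bmul g (bpow h 0) i j = g i j" .
qed

lemma bmul_one': "bmul g (\<lambda>i j. if i = 0 \<and> j = 0 then 1 else 0) = g"
  using bmul_one[of g] by simp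

lemma P_step:
  assumes D: "D \<ge> 1" and P: "Pinv D P" and pl: "\<forall>i<\<delta>. p i = 0" and pd: "p \<delta> \<noteq> 0"
  shows "Pinv (\<delta> * D) (bsubst (zser p) P R)"
proof -
  have s1: "supp_ge 1 0 (real D) P" and s2: "supp_ge 0 (-1) 0 P" and t: "tie 1 0 (real D) 0 1 0 P"
    using P unfolding Pinv_def supp_ge_def tie_def lin_def by auto
  have PD: "P D 0 \<noteq> 0" using P unfolding Pinv_def by auto
  have exp: "bsubst (zser p) P R i j = (\<Sum>a\<le>i+j. \<Sum>b\<le>i+j-a. zser p a b * bmul (bpow P a) (bpow R b) i j)" for i j
    by (simp add: bsubst_def)
  have trm: "zser p a b * bmul (bpow P a) (bpow R b) i j = (if b = 0 then p a * bpow P a i j else 0)" for a b i j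
    by (cases "b = 0") (auto simp: zser_def bmul_one')
  have pa: "\<delta> \<le> a" if "p a \<noteq> 0" for a using pl that by (meson not_le)
  have bs: "real a * real D \<le> real i" "j = 0" if "bpow P a i j \<noteq> 0" for a i j
    using bpow_supp[OF s1, of a] bpow_supp[OF s2, of a] that unfolding supp_ge_def lin_def by auto
  have supp: "j = 0 \<and> \<delta> * D \<le> i" if nz: "bsubst (zser p) P R i j \<noteq> 0" for i j
  proof -
    obtain a b where "zser p a b * bmul (bpow P a) (bpow R b) i j \<noteq> 0"
      using dsum_nz[OF nz[unfolded exp]] by blast
    then have ab: "b = 0" "p a \<noteq> 0" "bpow P a i j \<noteq> 0" unfolding trm by (auto split: if_splits)
    have "real (\<delta> * D) \<le> real a * real D" using pa[OF ab(2)] by (simp add: mult_right_mono)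
    then have "real (\<delta> * D) \<le> real i" using bs(1)[OF ab(3)] by linarith
    then have "\<delta> * D \<le> i" by (simp only: of_nat_le_iff)
    then show ?thesis using bs(2)[OF ab(3)] by simp
  qed
  have zero: "zser p a b * bmul (bpow P a) (bpow R b) (\<delta> * D) 0 = 0" if "(a, b) \<noteq> (\<delta>, 0)" for a b
  proof (cases "b = 0 \<and> p a \<noteq> 0")
    case True
    then have "a > \<delta>" using pa that by force
    then have "real (\<delta> * D) < real a * real D" using D by simp
    then have "bpow P a (\<delta> * D) 0 = 0" using bs(1)[of a "\<delta> * D" 0] by force
    then show ?thesis unfolding trm by simp
  next
    case False then show ?thesis unfolding trm by auto
  qed
  have le: "\<delta> + 0 \<le> \<delta> * D + 0" using D by simp
  have "bsubst (zser p) P R (\<delta> * D) 0 = zser p \<delta> 0 * bmul (bpow P \<delta>) (bpow R 0) (\<delta> * D) 0"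
    unfolding exp by (rule dsum_single[OF le]) (use zero in auto)
  also have "\<dots> = p \<delta> * P D 0 ^ \<delta>"
    using bpow_corner[OF s1 t, of D 0 \<delta>] by (simp add: zser_def bmul_one' lin_def)
  finally have "bsubst (zser p) P R (\<delta> * D) 0 \<noteq> 0" using pd PD by simp
  then show ?thesis unfolding Pinv_def using supp by blast
qed



definition quadset :: "bser \<Rightarrow> (real \<times> real) set" where
  "quadset g = \<Union>{{(x, y). x \<ge> real i \<and> y \<ge> real j} | i j. g i j \<noteq> 0}"

lemma np_def': "newton_polygon g = convex hull (quadset g)"
  by (simp add: newton_polygon_def quadset_def)

lemma quadset_iff: "p \<in> quadset g \<longleftrightarrow> (\<exists>i j. g i j \<noteq> 0 \<and> fst p \<ge> real i \<and> snd p \<ge> real j)"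
  unfolding quadset_def by (cases p) auto

lemma np_supp: "g i j \<noteq> 0 \<Longrightarrow> (real i, real j) \<in> newton_polygon g"
  unfolding np_def' by (rule hull_inc) (auto simp: quadset_iff)

lemma pair_comb: "fst (u *\<^sub>R p + v *\<^sub>R q) = u * fst p + v * fst q" "snd (u *\<^sub>R p + v *\<^sub>R q) = u * snd p + v * snd q"
  for p q :: "real \<times> real" by simp_all

lemma np_up:
  assumes "p \<in> newton_polygon g" "c \<ge> 0"
  shows "(fst p, snd p + c) \<in> newton_polygon g"
proof -
  let ?N = "newton_polygon g"
  define T where "T = {p. \<forall>c\<ge>0. (fst p, snd p + c) \<in> ?N}"
  have "quadset g \<subseteq> T"
  proof
    fix p assume "p \<in> quadset g"
    then obtain i j where "g i j \<noteq> 0" "fst p \<ge> real i" "snd p \<ge> real j" by (auto simp: quadset_iff)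
    then have "(fst p, snd p + c) \<in> quadset g" if "c \<ge> 0" for c using that
      unfolding quadset_iff by (intro exI[of _ i] exI[of _ j]) auto
    then show "p \<in> T" unfolding T_def np_def' by (auto intro: hull_inc)
  qed
  moreover have "convex T"
  proof (rule convexI)
    fix p q :: "real \<times> real" and u v :: real
    assume "p \<in> T" "q \<in> T" "0 \<le> u" "0 \<le> v" "u + v = 1"
    show "u *\<^sub>R p + v *\<^sub>R q \<in> T" unfolding T_def
    proof (intro CollectI allI impI)
      fix c :: real assume "c \<ge> 0"
      then have "(fst p, snd p + c) \<in> ?N" "(fst q, snd q + c) \<in> ?N" using \<open>p \<in> T\<close> \<open>q \<in> T\<close> by (auto simp: T_def)
      then have "u *\<^sub>R (fst p, snd p + c) + v *\<^sub>R (fst q, snd q + c) \<in> ?N"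
        using \<open>0 \<le> u\<close> \<open>0 \<le> v\<close> \<open>u + v = 1\<close> by (intro convexD) (auto simp: np_def')
      moreover have "u *\<^sub>R (fst p, snd p + c) + v *\<^sub>R (fst q, snd q + c)
          = (fst (u *\<^sub>R p + v *\<^sub>R q), snd (u *\<^sub>R p + v *\<^sub>R q) + c)"
      proof -
        have e1: "(u + v) * c = c" using \<open>u + v = 1\<close> by simp
        have "u * (snd p + c) + v * (snd q + c) = u * snd p + v * snd q + (u + v) * c"
          by (simp add: algebra_simps)
        then show ?thesis using e1 by (simp add: prod_eq_iff)
      qed
      ultimately show "(fst (u *\<^sub>R p + v *\<^sub>R q), snd (u *\<^sub>R p + v *\<^sub>R q) + c) \<in> ?N" by simp
    qed
  qed
  ultimately have "?N \<subseteq> T" unfolding np_def' by (rule hull_minimal)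
  then show ?thesis using assms unfolding T_def by auto
qed

lemma np_face:
  fixes c1 c2 e1 e2 m t :: real
  assumes c: "c1 > 0" "c2 > 0"
    and sg: "\<And>i j. g i j \<noteq> 0 \<Longrightarrow> m \<le> c1 * real i + c2 * real j \<and>
                 (c1 * real i + c2 * real j = m \<longrightarrow> t \<le> e1 * real i + e2 * real j)"
    and p: "p \<in> newton_polygon g"
  shows "m \<le> c1 * fst p + c2 * snd p \<and> (c1 * fst p + c2 * snd p = m \<longrightarrow> t \<le> e1 * fst p + e2 * snd p)"
proof -
  define S where "S = {p :: real \<times> real. m < c1 * fst p + c2 * snd p \<or>
      (c1 * fst p + c2 * snd p = m \<and> t \<le> e1 * fst p + e2 * snd p)}"
  have "quadset g \<subseteq> S"
  proof
    fix p assume "p \<in> quadset g"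
    then obtain i j where ij: "g i j \<noteq> 0" "fst p \<ge> real i" "snd p \<ge> real j" by (auto simp: quadset_iff)
    have "c1 * real i \<le> c1 * fst p" "c2 * real j \<le> c2 * snd p" using ij c by auto
    moreover note sgi = sg[OF ij(1)]
    show "p \<in> S"
    proof (cases "c1 * fst p + c2 * snd p = m")
      case True
      with calculation sgi have "c1 * real i = c1 * fst p" "c2 * real j = c2 * snd p" by linarith+
      then have "real i = fst p" "real j = snd p" using c by auto
      then show ?thesis using True sgi unfolding S_def by auto
    next
      case False
      with calculation sgi show ?thesis unfolding S_def by auto
    qed
  qed
  moreover have "convex S"
  proof (rule convexI)
    fix p q :: "real \<times> real" and u v :: real
    assume pq: "p \<in> S" "q \<in> S" "0 \<le> u" "0 \<le> v" "u + v = 1"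
    let ?L = "\<lambda>p::real\<times>real. c1 * fst p + c2 * snd p" and ?T = "\<lambda>p::real\<times>real. e1 * fst p + e2 * snd p"
    have L: "?L (u *\<^sub>R p + v *\<^sub>R q) = u * ?L p + v * ?L q" and T: "?T (u *\<^sub>R p + v *\<^sub>R q) = u * ?T p + v * ?T q"
      by (simp_all add: algebra_simps)
    show "u *\<^sub>R p + v *\<^sub>R q \<in> S"
    proof (cases "u = 0 \<or> v = 0")
      case True
      then show ?thesis using pq by auto
    next
      case False
      then have uv: "u > 0" "v > 0" using pq by auto
      have Lp: "m \<le> ?L p" "m \<le> ?L q" using pq unfolding S_def by auto
      show ?thesis
      proof (cases "?L p = m \<and> ?L q = m")
        case True
        then have "t \<le> ?T p" "t \<le> ?T q" using pq unfolding S_def by auto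
        then have "u * t + v * t \<le> u * ?T p + v * ?T q" using uv by (intro add_mono mult_left_mono) auto
        moreover have "u * t + v * t = t" using pq(5) by (metis distrib_right mult_1)
        moreover have "u * ?L p + v * ?L q = m" using True pq(5) by (metis distrib_right mult_1)
        ultimately show ?thesis unfolding S_def using L T by auto
      next
        case False
        then have "u * m + v * m < u * ?L p + v * ?L q"
          using Lp uv by (smt (verit) mult_strict_left_mono mult_left_mono)
        moreover have "u * m + v * m = m" using pq(5) by (metis distrib_right mult_1)
        ultimately show ?thesis unfolding S_def using L by auto
      qed
    qed
  qed
  ultimately have "newton_polygon g \<subseteq> S" unfolding np_def' by (rule hull_minimal)
  with p show ?thesis unfolding S_def by auto
qed

lemma np_extreme:
  fixes c1 c2 e1 e2 m t :: real
  assumes c: "c1 > 0" "c2 > 0" and det: "c1 * e2 \<noteq> c2 * e1"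
    and F: "\<And>p. p \<in> newton_polygon g \<Longrightarrow> m \<le> c1 * fst p + c2 * snd p \<and>
                 (c1 * fst p + c2 * snd p = m \<longrightarrow> t \<le> e1 * fst p + e2 * snd p)"
    and x: "x \<in> newton_polygon g" "c1 * fst x + c2 * snd x = m" "e1 * fst x + e2 * snd x = t"
  shows "x extreme_point_of newton_polygon g"
  unfolding extreme_point_of_def
proof (intro conjI ballI x(1))
  fix a b assume ab: "a \<in> newton_polygon g" "b \<in> newton_polygon g"
  show "x \<notin> open_segment a b"
  proof
    assume "x \<in> open_segment a b"
    then obtain u where u: "a \<noteq> b" "0 < u" "u < 1" "x = (1 - u) *\<^sub>R a + u *\<^sub>R b"
      by (auto simp: in_segment)
    let ?L = "\<lambda>p::real\<times>real. c1 * fst p + c2 * snd p" and ?T = "\<lambda>p::real\<times>real. e1 * fst p + e2 * snd p"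
    have L: "?L x = (1 - u) * ?L a + u * ?L b" and T: "?T x = (1 - u) * ?T a + u * ?T b"
      unfolding u(4) by (simp_all add: algebra_simps)
    have La: "m \<le> ?L a" "m \<le> ?L b" using F ab by auto
    have "?L a = m"
    proof (rule ccontr)
      have mm: "(1-u) * m + u * m = m" by (simp add: algebra_simps)
      assume "?L a \<noteq> m" then have "m < ?L a" using La by auto
      then have "(1-u) * m < (1-u) * ?L a" using u by auto
      moreover have "u * m \<le> u * ?L b" using La u by auto
      ultimately show False using L x(2) mm by linarith
    qed
    moreover have "?L b = m"
    proof (rule ccontr)
      have mm: "(1-u) * m + u * m = m" by (simp add: algebra_simps)
      assume "?L b \<noteq> m" then have "m < ?L b" using La by auto
      then have "u * m < u * ?L b" using u by auto
      moreover have "(1-u) * m \<le> (1-u) * ?L a" using La u by auto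
      ultimately show False using L x(2) mm by linarith
    qed
    ultimately have Ta: "t \<le> ?T a" "t \<le> ?T b" using F ab by auto
    have "?T a = t"
    proof (rule ccontr)
      have mm: "(1-u) * t + u * t = t" by (simp add: algebra_simps)
      assume "?T a \<noteq> t" then have "t < ?T a" using Ta by auto
      then have "(1-u) * t < (1-u) * ?T a" using u by auto
      moreover have "u * t \<le> u * ?T b" using Ta u by auto
      ultimately show False using T x(3) mm by linarith
    qed
    moreover have "?T b = t"
    proof (rule ccontr)
      have mm: "(1-u) * t + u * t = t" by (simp add: algebra_simps)
      assume "?T b \<noteq> t" then have "t < ?T b" using Ta by auto
      then have "u * t < u * ?T b" using u by auto
      moreover have "(1-u) * t \<le> (1-u) * ?T a" using Ta u by auto
      ultimately show False using T x(3) mm by linarith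
    qed
    moreover note \<open>?L a = m\<close> \<open>?L b = m\<close>
    ultimately have e: "c1 * (fst a - fst b) + c2 * (snd a - snd b) = 0" "e1 * (fst a - fst b) + e2 * (snd a - snd b) = 0"
      by (simp_all add: algebra_simps)
    let ?dx = "fst a - fst b" and ?dy = "snd a - snd b"
    have "(c1 * e2 - c2 * e1) * ?dx = e2 * (c1 * ?dx + c2 * ?dy) - c2 * (e1 * ?dx + e2 * ?dy)" by algebra
    then have "?dx = 0" using e det by simp
    moreover have "(c1 * e2 - c2 * e1) * ?dy = c1 * (e1 * ?dx + e2 * ?dy) - e1 * (c1 * ?dx + c2 * ?dy)" by algebra
    then have "?dy = 0" using e det by simp
    ultimately have "a = b" by (simp add: prod_eq_iff)
    with u(1) show False by simp
  qed
qed

lemma np_extreme_supp: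
  assumes "e extreme_point_of newton_polygon g"
  shows "\<exists>i j. g i j \<noteq> 0 \<and> e = (real i, real j)"
proof -
  have "e \<in> quadset g" using assms extreme_point_of_convex_hull unfolding np_def' by blast
  then obtain i j where ij: "g i j \<noteq> 0" "fst e \<ge> real i" "snd e \<ge> real j" by (auto simp: quadset_iff)
  let ?s = "(real i, real j)" and ?t = "(2 * fst e - real i, 2 * snd e - real j)"
  have "?s \<in> newton_polygon g" using np_supp[of g i j, OF ij(1)] .
  moreover have "?t \<in> newton_polygon g"
    unfolding np_def' by (rule hull_inc) (unfold quadset_iff, intro exI[of _ i] exI[of _ j], use ij in auto)
  moreover have "e = ?s" 
  proof (rule ccontr)
    assume ne: "e \<noteq> ?s"
    have "e = (1 - 1/2) *\<^sub>R ?s + (1/2) *\<^sub>R ?t" by (simp add: prod_eq_iff field_simps)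
    moreover have "?s \<noteq> ?t" using ne by (auto simp: prod_eq_iff)
    ultimately have "e \<in> open_segment ?s ?t" unfolding in_segment by (intro conjI exI[of _ "1/2"]) auto
    then show False using assms \<open>?s \<in> _\<close> \<open>?t \<in> _\<close> unfolding extreme_point_of_def by blast
  qed
  ultimately show ?thesis using ij by blast
qed

lemma np_chord:
  fixes c1 c2 :: real
  assumes c2: "c2 > 0" and N: "p1 \<in> newton_polygon g" "p2 \<in> newton_polygon g" "p3 \<in> newton_polygon g"
    and x: "fst p1 < fst p2" "fst p2 < fst p3"
    and L: "c1 * fst p1 + c2 * snd p1 \<le> c1 * fst p2 + c2 * snd p2"
           "c1 * fst p3 + c2 * snd p3 \<le> c1 * fst p2 + c2 * snd p2"
  shows "\<not> p2 extreme_point_of newton_polygon g"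
proof
  assume ext: "p2 extreme_point_of newton_polygon g"
  define t where "t = (fst p2 - fst p1) / (fst p3 - fst p1)"
  have t: "0 < t" "t < 1" using x unfolding t_def by (auto simp: field_simps)
  define c where "c = (1 - t) *\<^sub>R p1 + t *\<^sub>R p3"
  have cN: "c \<in> newton_polygon g" unfolding c_def np_def'
    using t N by (intro convexD_alt[OF convex_convex_hull]) (auto simp: np_def')
  have tt: "t * (fst p3 - fst p1) = fst p2 - fst p1" unfolding t_def using x by simp
  have "fst c = fst p1 + t * (fst p3 - fst p1)" unfolding c_def by (simp add: algebra_simps)
  then have cx: "fst c = fst p2" using tt by simp
  have Lc: "c1 * fst c + c2 * snd c = (1 - t) * (c1 * fst p1 + c2 * snd p1) + t * (c1 * fst p3 + c2 * snd p3)"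
    unfolding c_def by (simp add: algebra_simps)
  have "(1 - t) * (c1 * fst p1 + c2 * snd p1) + t * (c1 * fst p3 + c2 * snd p3) \<le>
        (1 - t) * (c1 * fst p2 + c2 * snd p2) + t * (c1 * fst p2 + c2 * snd p2)"
  proof -
    have "(1 - t) * (c1 * fst p1 + c2 * snd p1) \<le> (1 - t) * (c1 * fst p2 + c2 * snd p2)"
      using L(1) t by (intro mult_left_mono) auto
    moreover have "t * (c1 * fst p3 + c2 * snd p3) \<le> t * (c1 * fst p2 + c2 * snd p2)"
      using L(2) t by (intro mult_left_mono) auto
    ultimately show ?thesis by linarith
  qed
  moreover have "(1 - t) * (c1 * fst p2 + c2 * snd p2) + t * (c1 * fst p2 + c2 * snd p2) = c1 * fst p2 + c2 * snd p2"
    by (simp add: algebra_simps)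
  ultimately have "c1 * fst c + c2 * snd c \<le> c1 * fst p2 + c2 * snd p2" using Lc by linarith
  then have "c2 * snd c \<le> c2 * snd p2" using cx by simp
  then have cy: "snd c \<le> snd p2" using c2 by simp
  show False
  proof (cases "snd c = snd p2")
    case True
    then have "p2 = c" using cx by (simp add: prod_eq_iff)
    moreover have "p1 \<noteq> p3" using x by auto
    ultimately have "p2 \<in> open_segment p1 p3" unfolding in_segment c_def using t by blast
    then show False using ext N unfolding extreme_point_of_def by blast
  next
    case False
    then have lt: "snd c < snd p2" using cy by simp
    let ?q = "(fst p2, snd p2 + (snd p2 - snd c))"
    have qN: "?q \<in> newton_polygon g" using np_up[OF N(2), of "snd p2 - snd c"] lt by simp
    have "p2 = (1 - 1/2) *\<^sub>R c + (1/2) *\<^sub>R ?q" using cx by (simp add: prod_eq_iff field_simps)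
    moreover have "c \<noteq> ?q" using lt by (auto simp: prod_eq_iff)
    ultimately have "p2 \<in> open_segment c ?q" unfolding in_segment by (intro conjI exI[of _ "1/2"]) auto
    then show False using ext cN qN unfolding extreme_point_of_def by blast
  qed
qed



lemma np_preceding:
  fixes l \<mu> :: real and x0 y0 x1 y1 :: nat
  assumes l: "l > 0"
    and supp: "\<And>i j. g i j \<noteq> 0 \<Longrightarrow> \<mu> \<le> l * real i + 1 * real j \<and>
                 (l * real i + 1 * real j = \<mu> \<longrightarrow> real x0 \<le> 1 * real i + 0 * real j \<and> real y1 \<le> 0 * real i + 1 * real j)"
    and g0: "g x0 y0 \<noteq> 0" and g1: "g x1 y1 \<noteq> 0"
    and L0: "l * real x0 + real y0 = \<mu>" and L1: "l * real x1 + real y1 = \<mu>" and x: "x0 < x1"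
  shows "preceding_vertex (newton_polygon g) (real x0, real y0) (real x1, real y1)"
proof -
  let ?N = "newton_polygon g"
  have F1: "\<mu> \<le> l * fst p + 1 * snd p \<and> (l * fst p + 1 * snd p = \<mu> \<longrightarrow> real x0 \<le> 1 * fst p + 0 * snd p)"
    if "p \<in> ?N" for p
    by (rule np_face[OF l _ _ that]) (use supp in auto)
  have F2: "\<mu> \<le> l * fst p + 1 * snd p \<and> (l * fst p + 1 * snd p = \<mu> \<longrightarrow> real y1 \<le> 0 * fst p + 1 * snd p)"
    if "p \<in> ?N" for p
    by (rule np_face[OF l _ _ that]) (use supp in auto)
  have u: "(real x0, real y0) \<in> ?N" using np_supp[of g x0 y0, OF g0] .
  have v: "(real x1, real y1) \<in> ?N" using np_supp[of g x1 y1, OF g1] .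
  have eu: "(real x0, real y0) extreme_point_of ?N"
    by (rule np_extreme[OF l _ _ F1 u]) (use L0 in auto)
  have ev: "(real x1, real y1) extreme_point_of ?N"
    using l by (intro np_extreme[OF l _ _ F2 v]) (use L1 in auto)
  have nb: "\<not> (real x0 < fst w \<and> fst w < real x1)" if "w extreme_point_of ?N" for w
  proof
    assume w: "real x0 < fst w \<and> fst w < real x1"
    have wN: "w \<in> ?N" using that unfolding extreme_point_of_def by auto
    have "\<mu> \<le> l * fst w + 1 * snd w" using F1[OF wN] by auto
    then have "\<not> w extreme_point_of ?N"
      using w L0 L1 by (intro np_chord[OF _ u wN v, of 1 l]) auto
    with that show False by simp
  qed
  show ?thesis unfolding preceding_vertex_def using eu ev nb x by auto
qed

lemma np_min_extreme:
  fixes c1 c2 :: nat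
  assumes c: "c1 \<ge> 1" "c2 \<ge> 1" and nz: "\<exists>i j. g i j \<noteq> 0"
  shows "\<exists>i j. g i j \<noteq> 0 \<and> (real i, real j) extreme_point_of newton_polygon g \<and>
           (\<forall>a b. g a b \<noteq> 0 \<longrightarrow> c1 * i + c2 * j \<le> c1 * a + c2 * b)"
proof -
  define m where "m = (LEAST m. \<exists>a b. g a b \<noteq> 0 \<and> c1 * a + c2 * b = m)"
  have m1: "\<exists>a b. g a b \<noteq> 0 \<and> c1 * a + c2 * b = m" unfolding m_def
    by (rule LeastI_ex) (use nz in blast)
  have m2: "m \<le> c1 * a + c2 * b" if "g a b \<noteq> 0" for a b unfolding m_def
    by (rule Least_le) (use that in blast)
  define x where "x = (LEAST i. \<exists>j. g i j \<noteq> 0 \<and> c1 * i + c2 * j = m)"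
  have "\<exists>j. g x j \<noteq> 0 \<and> c1 * x + c2 * j = m" unfolding x_def
    by (rule LeastI_ex) (use m1 in blast)
  then obtain y where xy: "g x y \<noteq> 0" "c1 * x + c2 * y = m" by blast
  have x2: "x \<le> a" if "g a b \<noteq> 0" "c1 * a + c2 * b = m" for a b unfolding x_def
    by (rule Least_le) (use that in blast)
  have cpos: "real c1 > 0" "real c2 > 0" using c by auto
  have F: "real m \<le> real c1 * fst p + real c2 * snd p \<and>
      (real c1 * fst p + real c2 * snd p = real m \<longrightarrow> real x \<le> 1 * fst p + 0 * snd p)"
    if "p \<in> newton_polygon g" for p
  proof (rule np_face[OF cpos _ that])
    fix i j assume "g i j \<noteq> 0"
    then have "m \<le> c1 * i + c2 * j" "c1 * i + c2 * j = m \<longrightarrow> x \<le> i" using m2 x2 by auto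
    then show "real m \<le> real c1 * real i + real c2 * real j \<and>
        (real c1 * real i + real c2 * real j = real m \<longrightarrow> real x \<le> 1 * real i + 0 * real j)"
      by (metis (mono_tags) of_nat_add of_nat_mult of_nat_le_iff of_nat_eq_iff mult_1 mult_zero_left add_0_right)
  qed
  have "(real x, real y) extreme_point_of newton_polygon g"
    using cpos by (intro np_extreme[OF cpos _ F np_supp[of g x y, OF xy(1)]])
       (auto simp: xy(2)[symmetric])
  moreover have "\<forall>a b. g a b \<noteq> 0 \<longrightarrow> c1 * x + c2 * y \<le> c1 * a + c2 * b" using m2 xy(2) by auto
  ultimately show ?thesis using xy(1) by blast
qed

lemma np_edge:
  fixes g :: bser and nv mv :: "nat \<Rightarrow> nat" and s jj :: nat
  assumes verts: "{v. v extreme_point_of newton_polygon g} = (\<lambda>i. (real (nv i), real (mv i))) ` {1..s}"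
    and order: "\<forall>i j. 1 \<le> i \<longrightarrow> i < j \<longrightarrow> j \<le> s \<longrightarrow> nv i < nv j \<and> mv j < mv i"
    and nz: "\<exists>i j. g i j \<noteq> 0" and jj: "1 \<le> jj" "jj + 1 \<le> s"
    and ab: "g a b \<noteq> 0"
  defines "c1 \<equiv> real (mv jj) - real (mv (jj+1))" and "c2 \<equiv> real (nv (jj+1)) - real (nv jj)"
  shows "c1 * real (nv jj) + c2 * real (mv jj) \<le> c1 * real a + c2 * real b \<and>
    (c1 * real a + c2 * real b = c1 * real (nv jj) + c2 * real (mv jj) \<longrightarrow> nv jj \<le> a \<and> a \<le> nv (jj+1))"
proof -
  let ?N = "newton_polygon g"
  let ?v = "\<lambda>i. (real (nv i), real (mv i))"
  let ?L = "\<lambda>p::real\<times>real. c1 * fst p + c2 * snd p"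
  define Lv where "Lv = c1 * real (nv jj) + c2 * real (mv jj)"
  have vext: "?v i extreme_point_of ?N" if "i \<in> {1..s}" for i
    using verts that by blast
  have vN: "?v i \<in> ?N" if "i \<in> {1..s}" for i using vext[OF that] unfolding extreme_point_of_def by auto
  have ord: "nv jj < nv (jj+1)" "mv (jj+1) < mv jj" using order jj by auto
  have c: "c1 > 0" "c2 > 0" using ord unfolding c1_def c2_def by auto
  have Leq: "?L (?v (jj+1)) = Lv" unfolding Lv_def c1_def c2_def by (simp add: algebra_simps)
  have Lv1: "?L (?v jj) = Lv" unfolding Lv_def by simp
  have j1: "jj \<in> {1..s}" "jj + 1 \<in> {1..s}" using jj by auto
  have C: "real (nv jj) \<le> fst p \<and> fst p \<le> real (nv (jj+1))" if pN: "p \<in> ?N" and Lp: "?L p \<le> Lv" for p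
  proof (rule ccontr)
    assume "\<not> ?thesis"
    then consider "fst p < real (nv jj)" | "real (nv (jj+1)) < fst p" by linarith
    then show False
    proof cases
      case 1
      have "\<not> ?v jj extreme_point_of ?N"
        by (rule np_chord[where ?c1.0 = c1, OF c(2) pN vN[OF j1(1)] vN[OF j1(2)]]) (use 1 ord Lp Leq Lv1 in auto)
      then show False using vext[OF j1(1)] by simp
    next
      case 2
      have "\<not> ?v (jj+1) extreme_point_of ?N"
        by (rule np_chord[where ?c1.0 = c1, OF c(2) vN[OF j1(1)] vN[OF j1(2)] pN]) (use 2 ord Lp Leq Lv1 in auto)
      then show False using vext[OF j1(2)] by simp
    qed
  qed
  have C1: "mv jj - mv (jj+1) \<ge> 1" "nv (jj+1) - nv jj \<ge> 1" using ord by auto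
  obtain ie je where e: "g ie je \<noteq> 0" "(real ie, real je) extreme_point_of ?N"
    "\<forall>a b. g a b \<noteq> 0 \<longrightarrow> (mv jj - mv (jj+1)) * ie + (nv (jj+1) - nv jj) * je \<le> (mv jj - mv (jj+1)) * a + (nv (jj+1) - nv jj) * b"
    using np_min_extreme[OF C1 nz] by blast
  have creal: "real (mv jj - mv (jj+1)) = c1" "real (nv (jj+1) - nv jj) = c2"
    unfolding c1_def c2_def using ord by (auto simp: of_nat_diff)
  have eL: "?L (real ie, real je) \<le> ?L (real a, real b)" if "g a b \<noteq> 0" for a b
  proof -
    have "real ((mv jj - mv (jj+1)) * ie + (nv (jj+1) - nv jj) * je) \<le> real ((mv jj - mv (jj+1)) * a + (nv (jj+1) - nv jj) * b)"
      using e(3) that by (simp only: of_nat_le_iff) blast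
    then show ?thesis unfolding of_nat_add of_nat_mult creal by simp
  qed
  obtain i where i: "i \<in> {1..s}" "(real ie, real je) = ?v i" using e(2) verts by blast
  have "Lv \<le> ?L (real ie, real je)"
  proof (rule ccontr)
    assume "\<not> ?thesis"
    then have lt: "?L (real ie, real je) < Lv" by simp
    have eN: "(real ie, real je) \<in> ?N" using e(2) unfolding extreme_point_of_def by auto
    have "real (nv jj) \<le> real (nv i) \<and> real (nv i) \<le> real (nv (jj+1))" using C[OF eN] lt i(2) by auto
    then have ni: "nv jj \<le> nv i" "nv i \<le> nv (jj+1)" by auto
    have "i = jj \<or> i = jj + 1"
    proof (rule ccontr)
      assume "\<not> ?thesis"
      then consider "i < jj" | "jj + 1 < i" by linarith
      then show False
      proof cases
        case 1 then have "nv i < nv jj" using order i(1) jj by auto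
        then show False using ni by simp
      next
        case 2 then have "nv (jj+1) < nv i" using order i(1) jj by auto
        then show False using ni by simp
      qed
    qed
    then have "?L (real ie, real je) = Lv" using i(2) Leq Lv1 by auto
    then show False using lt by simp
  qed
  then have ge: "Lv \<le> ?L (real a, real b)" using eL[OF ab] by linarith
  moreover have "?L (real a, real b) = Lv \<longrightarrow> nv jj \<le> a \<and> a \<le> nv (jj+1)"
    using C[OF np_supp[of g a b, OF ab]] by auto
  ultimately show ?thesis unfolding Lv_def by auto
qed



definition gsum :: "nat \<Rightarrow> nat \<Rightarrow> nat \<Rightarrow> nat" where
  "gsum D e n = (\<Sum>i<n. D ^ (n - 1 - i) * e ^ i)"

lemma gsum_Suc: "gsum D e (Suc n) = D ^ n + e * gsum D e n"
proof -
  have "gsum D e (Suc n) = D ^ (Suc n - 1 - 0) * e ^ 0 + (\<Sum>i<n. D ^ (Suc n - 1 - Suc i) * e ^ Suc i)"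
    unfolding gsum_def by (rule sum.lessThan_Suc_shift)
  also have "(\<Sum>i<n. D ^ (Suc n - 1 - Suc i) * e ^ Suc i) = e * (\<Sum>i<n. D ^ (n - 1 - i) * e ^ i)"
    by (simp add: sum_distrib_left algebra_simps)
  finally show ?thesis unfolding gsum_def by simp
qed

fun xa :: "nat \<Rightarrow> nat \<Rightarrow> nat \<Rightarrow> nat \<Rightarrow> nat \<Rightarrow> nat" where
  "xa D g e A 0 = 0"
| "xa D g e A (Suc n) = (if n = 0 then A else D ^ n * g + e * xa D g e A n)"

lemma edge_step:
  fixes A B g d :: nat and l T1 :: real
  assumes l: "l > 0" and D: "D \<ge> 1" and P: "Pinv D P" and R: "Rinv l (real D) x0 y0 x1 y1 R"
    and y: "y0 \<ge> 1" "y1 \<ge> 1"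
    and W1: "\<And>a b. q a b \<noteq> 0 \<Longrightarrow> T1 \<le> l * real a + real b \<and> (l * real a + real b = T1 \<longrightarrow> A \<le> a \<and> a \<le> g)"
    and qA: "q A B \<noteq> 0" and qg: "q g d \<noteq> 0" and TA: "l * real A + real B = T1" and Tg: "l * real g + real d = T1"
  shows "Rinv l (real D * T1) (A * D + B * x0) (B * y0) (g * D + d * x1) (d * y1) (bsubst q P R)"
proof -
  have Dp: "real D > 0" using D by simp
  have hD: "real D = l * real x0 + real y0" using R unfolding Rinv_def lin_def by simp
  have face: "l * real a + real b = T1" if "real a * (l * real D) + real b * real D = real D * T1" for a b
  proof -
    have "real D * (l * real a + real b) = real D * T1" using that by (simp add: algebra_simps)
    then show ?thesis using Dp by simp
  qed
  show ?thesis
  proof (rule R_step[OF l D P R])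
    show "0 < real D" by (rule Dp)
    show "real D * T1 \<le> real a * (l * real D) + real b * real D" if "q a b \<noteq> 0" for a b
    proof -
      have "real D * T1 \<le> real D * (l * real a + real b)" using W1[OF that] Dp by simp
      then show ?thesis by (simp add: algebra_simps)
    qed
    show "A * D + B * x0 \<le> a * D + b * x0 \<and> (a * D + b * x0 = A * D + B * x0 \<longrightarrow> a = A \<and> b = B)"
      if "q a b \<noteq> 0" "real a * (l * real D) + real b * real D = real D * T1" for a b
    proof -
      have L: "l * real a + real b = T1" using face that(2) .
      have aA: "A \<le> a" using W1[OF that(1)] L by auto
      have hb: "real b = T1 - l * real a" and hB: "real B = T1 - l * real A" using L TA by auto
      have key: "real (a * D + b * x0) - real (A * D + B * x0) = (real a - real A) * real y0"
        by (simp add: hb hB hD algebra_simps)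
      have "(real a - real A) * real y0 \<ge> 0" using aA by simp
      then have le: "A * D + B * x0 \<le> a * D + b * x0" using key by linarith
      have "a * D + b * x0 = A * D + B * x0 \<longrightarrow> a = A \<and> b = B"
      proof
        assume "a * D + b * x0 = A * D + B * x0"
        then have "(real a - real A) * real y0 = 0" using key by simp
        then have "a = A" using y by simp
        then show "a = A \<and> b = B" using hb hB by simp
      qed
      then show ?thesis using le by simp
    qed
    show "d * y1 \<le> b * y1 \<and> (b * y1 = d * y1 \<longrightarrow> a = g \<and> b = d)"
      if "q a b \<noteq> 0" "real a * (l * real D) + real b * real D = real D * T1" for a b
    proof -
      have L: "l * real a + real b = T1" using face that(2) .
      have ag: "a \<le> g" using W1[OF that(1)] L by auto
      have hb: "real b = T1 - l * real a" and hd: "real d = T1 - l * real g" using L Tg by auto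
      have key: "real (b * y1) - real (d * y1) = l * (real g - real a) * real y1"
        by (simp add: hb hd algebra_simps)
      have "l * (real g - real a) * real y1 \<ge> 0" using ag l by simp
      then have le: "d * y1 \<le> b * y1" using key by linarith
      have "b * y1 = d * y1 \<longrightarrow> a = g \<and> b = d"
      proof
        assume "b * y1 = d * y1"
        then have "real (b * y1) - real (d * y1) = 0" by auto
        then have "l * (real g - real a) * real y1 = 0" using key by linarith
        then have "real g - real a = 0" using y l by simp
        then have "a = g" by simp
        then show "a = g \<and> b = d" using hb hd by simp
      qed
      then show ?thesis using le by simp
    qed
    show "q A B \<noteq> 0" "q g d \<noteq> 0" by (fact qA, fact qg)
    show "real A * (l * real D) + real B * real D = real D * T1"
      using TA[symmetric] by (simp add: algebra_simps)
    show "real g * (l * real D) + real d * real D = real D * T1"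
      using Tg[symmetric] by (simp add: algebra_simps)
  qed
qed



lemma vertex_step:
  fixes A g d :: nat and l l' T1 \<mu> :: real
  assumes l: "l > 0" and ll: "l' < l" and D: "D \<ge> 1" and P: "Pinv D P" and R: "Rinv l \<mu> x0 y0 x1 y1 R"
    and mu: "real D < \<mu>" and mu2: "l' * \<mu> < l * real D"
    and W1: "\<And>a b. q a b \<noteq> 0 \<Longrightarrow> T1 \<le> l * real a + real b \<and> (l * real a + real b = T1 \<longrightarrow> A \<le> a \<and> a \<le> g)"
    and W2: "\<And>a b. q a b \<noteq> 0 \<Longrightarrow> l' * real g + real d \<le> l' * real a + real b \<and> (l' * real a + real b = l' * real g + real d \<longrightarrow> g \<le> a)"
    and qg: "q g d \<noteq> 0" and Tg: "l * real g + real d = T1"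
  shows "Rinv l (real g * (l * real D) + real d * \<mu>) (g * D + d * x0) (d * y0) (g * D + d * x1) (d * y1) (bsubst q P R)"
proof -
  have Dp: "real D > 0" using D by simp
  define s where "s = (l * real D - l' * \<mu>) / (l - l')"
  define t where "t = \<mu> - s"
  have s: "s > 0" unfolding s_def using ll mu2 by simp
  have t: "t > 0"
  proof -
    have "t = l * (\<mu> - real D) / (l - l')" unfolding t_def s_def using ll by (simp add: field_simps)
    then show ?thesis using l ll mu by simp
  qed
  have id: "real a * (l * real D) + real b * \<mu> = s * (l * real a + real b) + t * (l' * real a + real b)" for a b
  proof -
    have "s * (l - l') = l * real D - l' * \<mu>" unfolding s_def using ll by simp
    then show ?thesis unfolding t_def by (simp add: algebra_simps) (metis (no_types, opaque_lifting) mult.commute mult.left_commute distrib_left)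
  qed
  let ?M = "real g * (l * real D) + real d * \<mu>"
  have key: "?M \<le> real a * (l * real D) + real b * \<mu> \<and> (real a * (l * real D) + real b * \<mu> = ?M \<longrightarrow> a = g \<and> b = d)"
    if "q a b \<noteq> 0" for a b
  proof -
    have e1: "T1 \<le> l * real a + real b" "l' * real g + real d \<le> l' * real a + real b" using W1[OF that] W2[OF that] by auto
    have i1: "s * T1 \<le> s * (l * real a + real b)" "t * (l' * real g + real d) \<le> t * (l' * real a + real b)"
      using e1 s t by auto
    have i2: "?M = s * T1 + t * (l' * real g + real d)" using id[of g d] Tg by simp
    from i1 i2 have le: "?M \<le> real a * (l * real D) + real b * \<mu>" using id[of a b] by linarith
    have "a = g \<and> b = d" if eq: "real a * (l * real D) + real b * \<mu> = ?M"
    proof -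
      have "s * T1 = s * (l * real a + real b) \<and> t * (l' * real g + real d) = t * (l' * real a + real b)"
        using eq id[of a b] i1 i2 by linarith
      then have "T1 = l * real a + real b" "l' * real g + real d = l' * real a + real b" using s t by auto
      then have "A \<le> a \<and> a \<le> g" "g \<le> a" using W1[OF \<open>q a b \<noteq> 0\<close>] W2[OF \<open>q a b \<noteq> 0\<close>] by auto
      then have "a = g" by simp
      then show ?thesis using \<open>T1 = _\<close> Tg by simp
    qed
    then show ?thesis using le by blast
  qed
  show ?thesis
  proof (rule R_step[OF l D P R])
    show "0 < \<mu>" using Dp mu by simp
    show "?M \<le> real a * (l * real D) + real b * \<mu>" if "q a b \<noteq> 0" for a b using key[OF that] by blast
    show "g * D + d * x0 \<le> a * D + b * x0 \<and> (a * D + b * x0 = g * D + d * x0 \<longrightarrow> a = g \<and> b = d)"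
      if "q a b \<noteq> 0" "real a * (l * real D) + real b * \<mu> = ?M" for a b using key[OF that(1)] that(2) by auto
    show "d * y1 \<le> b * y1 \<and> (b * y1 = d * y1 \<longrightarrow> a = g \<and> b = d)"
      if "q a b \<noteq> 0" "real a * (l * real D) + real b * \<mu> = ?M" for a b using key[OF that(1)] that(2) by auto
  qed (use qg in auto)
qed



lemma final_vertex:
  fixes l \<mu> :: real
  assumes l: "l > 0" and R: "Rinv l \<mu> x0 y0 x1 y1 Q" and y: "y1 < y0"
  shows "preceding_vertex (newton_polygon Q) (real x0, real y0) (real x1, real y1)
    \<and> slope (real x0, real y0) (real x1, real y1) = - l
    \<and> y_intercept (real x0, real y0) (real x1, real y1) = \<mu>"
proof -
  have L: "l * real x0 + real y0 = \<mu>" "l * real x1 + real y1 = \<mu>" using R unfolding Rinv_def lin_def by auto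
  have "l * real x0 < l * real x1" using L y by linarith
  then have x: "x0 < x1" using l by simp
  have pv: "preceding_vertex (newton_polygon Q) (real x0, real y0) (real x1, real y1)"
  proof (rule np_preceding[OF l _ _ _ L x])
    show "Q x0 y0 \<noteq> 0" "Q x1 y1 \<noteq> 0" using R unfolding Rinv_def by auto
    fix i j assume "Q i j \<noteq> 0"
    then show "\<mu> \<le> l * real i + 1 * real j \<and>
         (l * real i + 1 * real j = \<mu> \<longrightarrow> real x0 \<le> 1 * real i + 0 * real j \<and> real y1 \<le> 0 * real i + 1 * real j)"
      using R unfolding Rinv_def supp_ge_def tie_def lin_def by auto
  qed
  have xr: "real x1 - real x0 \<noteq> 0" using x by simp
  have "real y1 - real y0 = - l * (real x1 - real x0)" using L by (simp add: algebra_simps)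
  then have sl: "slope (real x0, real y0) (real x1, real y1) = - l"
    unfolding slope_def using xr by simp
  have "y_intercept (real x0, real y0) (real x1, real y1) = real y0 - slope (real x0, real y0) (real x1, real y1) * real x0"
    unfolding y_intercept_def slope_def by simp
  then have "y_intercept (real x0, real y0) (real x1, real y1) = \<mu>" using sl L by simp
  with pv sl show ?thesis by blast
qed

lemma xa_closed:
  assumes "n \<ge> 1"
  shows "real (xa D gm e A n) = real (gm * gsum D e n) - (real gm - real A) * real e ^ (n - 1)"
proof -
  obtain m where n: "n = Suc m" using assms by (cases n) auto
  have "real (xa D gm e A (Suc m)) = real (gm * gsum D e (Suc m)) - (real gm - real A) * real e ^ m"
  proof (induction m)
    case 0 then show ?case by (simp add: gsum_def)
  next
    case (Suc m)
    have "real (xa D gm e A (Suc (Suc m))) = real D ^ Suc m * real gm + real e * real (xa D gm e A (Suc m))"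
      by simp
    also have "\<dots> = real (gm * gsum D e (Suc (Suc m))) - (real gm - real A) * real e ^ Suc m"
      unfolding Suc gsum_Suc[of D e "Suc m"] by (simp add: algebra_simps)
    finally show ?case .
  qed
  then show ?thesis using n by simp
qed

lemma skew_Suc: "skew_iter p q (Suc n) = (bsubst (zser p) (fst (skew_iter p q n)) (snd (skew_iter p q n)),
   bsubst q (fst (skew_iter p q n)) (snd (skew_iter p q n)))"
  by (cases "skew_iter p q n") simp

lemma P_all:
  assumes "\<delta> \<ge> 1" "\<forall>i<\<delta>. p i = 0" "p \<delta> \<noteq> 0"
  shows "Pinv (\<delta> ^ n) (fst (skew_iter p q n))"
proof (induction n)
  case 0 then show ?case by (simp add: Pinv_def)
next
  case (Suc n)
  have "\<delta> ^ n \<ge> 1" using assms(1) by simp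
  from P_step[OF this Suc assms(2,3)]
  have "Pinv (\<delta> * \<delta> ^ n) (bsubst (zser p) (fst (skew_iter p q n)) (snd (skew_iter p q n)))" by blast
  then show ?case unfolding skew_Suc by simp
qed

lemma R_zero: "Rinv l 1 0 1 0 1 (snd (skew_iter p q 0))"
  by (simp add: Rinv_def supp_ge_def tie_def lin_def)

lemma conv_lin:
  fixes c1 c2 l x y X Y :: real
  assumes "c2 > 0" "c1 = l * c2"
  shows "(c1 * X + c2 * Y \<le> c1 * x + c2 * y \<longleftrightarrow> l * X + Y \<le> l * x + y)"
    "(c1 * x + c2 * y = c1 * X + c2 * Y \<longleftrightarrow> l * x + y = l * X + Y)"
proof -
  have e: "c1 * x + c2 * y = c2 * (l * x + y)" "c1 * X + c2 * Y = c2 * (l * X + Y)"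
    using assms(2) by (simp_all add: algebra_simps)
  show "(c1 * X + c2 * Y \<le> c1 * x + c2 * y \<longleftrightarrow> l * X + Y \<le> l * x + y)"
    unfolding e using assms(1) by simp
  show "(c1 * x + c2 * y = c1 * X + c2 * Y \<longleftrightarrow> l * x + y = l * X + Y)"
    unfolding e using assms(1) by simp
qed



theorem proposition6:
  fixes p :: "nat \<Rightarrow> complex" and q :: bser and \<delta> :: nat
    and s k :: nat and nv mv :: "nat \<Rightarrow> nat"
  assumes p_conv: "conv_germ1 p" and p_low: "\<forall>i<\<delta>. p i = 0" and p_lead: "p \<delta> \<noteq> 0"
    and \<delta>_pos: "\<delta> \<ge> 1"
    and q_conv: "conv_germ2 q" and q_fix: "q 0 0 = 0" and q_nz: "\<exists>i j. q i j \<noteq> 0"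
    and verts: "{v. v extreme_point_of newton_polygon q} = (\<lambda>i. (real (nv i), real (mv i))) ` {1..s}"
    and order: "\<forall>i j. 1 \<le> i \<longrightarrow> i < j \<longrightarrow> j \<le> s \<longrightarrow> nv i < nv j \<and> mv j < mv i"
    and s_gt: "s > 2" and k_lo: "2 \<le> k" and k_hi: "k \<le> s - 1"
    and case4_lo: "y_intercept (real (nv k), real (mv k)) (real (nv (k+1)), real (mv (k+1))) \<le> real \<delta>"
    and case4_hi: "real \<delta> \<le> y_intercept (real (nv (k-1)), real (mv (k-1))) (real (nv k), real (mv k))"
  shows
   "(real \<delta> < y_intercept (real (nv (k-1)), real (mv (k-1))) (real (nv k), real (mv k)) \<longrightarrow>
      (\<forall>n\<ge>1.
        let Qn = snd (skew_iter p q n);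
            \<gamma>n = real (nv k * (\<Sum>i<n. \<delta> ^ (n - 1 - i) * mv k ^ i));
            u = (\<gamma>n - (real (nv k) - real (nv (k-1))) * real (mv k) ^ (n - 1),
                 real (mv (k-1)) * real (mv k) ^ (n - 1));
            v = (\<gamma>n, real (mv k ^ n))
        in preceding_vertex (newton_polygon Qn) u v
           \<and> slope u v = - 1 / ((real (nv k) - real (nv (k-1))) / (real (mv (k-1)) - real (mv k)))
           \<and> real \<delta> ^ n < y_intercept u v))
    \<and>
    (real \<delta> = y_intercept (real (nv (k-1)), real (mv (k-1))) (real (nv k), real (mv k)) \<longrightarrow>
      (\<forall>n\<ge>1.
        let Qn = snd (skew_iter p q n);
            \<gamma>n = real (nv k * (\<Sum>i<n. \<delta> ^ (n - 1 - i) * mv k ^ i));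
            u = (real ((\<Sum>i<n. \<delta> ^ (n - 1 - i) * mv (k-1) ^ i) * nv (k-1)),
                 real (mv (k-1) ^ n));
            v = (\<gamma>n, real (mv k ^ n))
        in preceding_vertex (newton_polygon Qn) u v
           \<and> slope u v = - 1 / ((real (nv k) - real (nv (k-1))) / (real (mv (k-1)) - real (mv k)))
           \<and> real \<delta> ^ n = y_intercept u v))"

proof -
  define A where "A = nv (k-1)"
  define B where "B = mv (k-1)"
  define gm where "gm = nv k"
  define d where "d = mv k"
  define n2 where "n2 = nv (k+1)"
  define m2 where "m2 = mv (k+1)"
  have kk: "1 \<le> k - 1" "k - 1 + 1 = k" "k + 1 \<le> s" "k < s" "1 \<le> k" using k_lo k_hi s_gt by auto
  have o1: "A < gm" "d < B" unfolding A_def gm_def B_def d_def using order kk by auto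
  have o2: "gm < n2" "m2 < d" unfolding n2_def gm_def m2_def d_def using order kk by auto
  have "mv s < mv k" using order kk by auto
  then have dpos: "d \<ge> 1" unfolding d_def by simp
  have Bpos: "B \<ge> 1" using o1 by simp
  define l where "l = (real B - real d) / (real gm - real A)"
  define l' where "l' = (real d - real m2) / (real n2 - real gm)"
  have l: "l > 0" unfolding l_def using o1 by simp
  have l'p: "l' > 0" unfolding l'_def using o2 by simp
  define T1 where "T1 = real B + l * real A"
  have TA: "l * real A + real B = T1" unfolding T1_def by simp
  have lg: "l * (real gm - real A) = real B - real d" unfolding l_def using o1 by simp
  have Tg: "l * real gm + real d = T1" unfolding T1_def using lg by (simp add: algebra_simps)
  have nz1: "real gm - real A \<noteq> 0" "real n2 - real gm \<noteq> 0" using o1 o2 by auto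
  have nz3: "real B - real d \<noteq> 0" using o1 by auto
  have yint1: "y_intercept (real (nv (k-1)), real (mv (k-1))) (real (nv k), real (mv k)) = T1"
    unfolding y_intercept_def T1_def l_def A_def[symmetric] B_def[symmetric] gm_def[symmetric] d_def[symmetric]
    using nz1 by (simp add: field_simps)
  have l'g: "l' * (real n2 - real gm) = real d - real m2" unfolding l'_def using o2 by simp
  have yint2: "y_intercept (real (nv k), real (mv k)) (real (nv (k+1)), real (mv (k+1))) = real d + l' * real gm"
    unfolding y_intercept_def l'_def n2_def[symmetric] m2_def[symmetric] gm_def[symmetric] d_def[symmetric]
    using nz1 by (simp add: field_simps)
  have T2: "real d + l' * real gm \<le> real \<delta>" using case4_lo yint2 by simp
  have vext: "(real (nv i), real (mv i)) extreme_point_of newton_polygon q" if "i \<in> {1..s}" for i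
    using verts that by blast
  have vsupp: "q (nv i) (mv i) \<noteq> 0" if iI: "i \<in> {1..s}" for i
  proof -
    obtain a b where "q a b \<noteq> 0" "(real (nv i), real (mv i)) = (real a, real b)"
      using np_extreme_supp[OF vext[OF iI]] by blast
    then show ?thesis by simp
  qed
  have qA: "q A B \<noteq> 0" unfolding A_def B_def using vsupp kk by simp
  have qg: "q gm d \<noteq> 0" unfolding gm_def d_def using vsupp kk by simp
  have qn: "q n2 m2 \<noteq> 0" unfolding n2_def m2_def using vsupp kk by simp
  have E1: "T1 \<le> l * real a + real b \<and> (l * real a + real b = T1 \<longrightarrow> A \<le> a \<and> a \<le> gm)" if "q a b \<noteq> 0" for a b
  proof -
    have e: "(real B - real d) * real A + (real gm - real A) * real B \<le> (real B - real d) * real a + (real gm - real A) * real b \<and>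
      ((real B - real d) * real a + (real gm - real A) * real b = (real B - real d) * real A + (real gm - real A) * real B \<longrightarrow> A \<le> a \<and> a \<le> gm)"
      using np_edge[OF verts order q_nz kk(1), of a b] kk that
      unfolding A_def B_def gm_def d_def by simp
    have c: "real gm - real A > 0" "real B - real d = l * (real gm - real A)" using o1 lg by auto
    show ?thesis using e unfolding conv_lin[OF c] TA by simp
  qed
  have E2: "l' * real gm + real d \<le> l' * real a + real b \<and> (l' * real a + real b = l' * real gm + real d \<longrightarrow> gm \<le> a)"
    if "q a b \<noteq> 0" for a b
  proof -
    have e: "(real d - real m2) * real gm + (real n2 - real gm) * real d \<le> (real d - real m2) * real a + (real n2 - real gm) * real b \<and>
      ((real d - real m2) * real a + (real n2 - real gm) * real b = (real d - real m2) * real gm + (real n2 - real gm) * real d \<longrightarrow> gm \<le> a \<and> a \<le> n2)"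
      using np_edge[OF verts order q_nz kk(5) kk(3), of a b] that
      unfolding n2_def m2_def gm_def d_def by simp
    have c: "real n2 - real gm > 0" "real d - real m2 = l' * (real n2 - real gm)" using o2 l'g by auto
    show ?thesis using e unfolding conv_lin[OF c] by simp
  qed
  have ll: "l' < l"
  proof -
    have "T1 \<le> l * real n2 + real m2" using E1[OF qn] by simp
    moreover have "l * real n2 + real m2 \<noteq> T1" using E1[OF qn] o2 by auto
    ultimately have "T1 < l * real n2 + real m2" by simp
    then have "real d - real m2 < l * (real n2 - real gm)" using Tg by (simp add: algebra_simps)
    then have "l' * (real n2 - real gm) < l * (real n2 - real gm)" using l'g by simp
    then show ?thesis using o2 by simp
  qed
  note PA = P_all[where q = q, OF \<delta>_pos p_low p_lead]
  have D1: "\<delta> ^ n \<ge> 1" for n using \<delta>_pos by simp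
  have slopeeq: "- 1 / ((real (nv k) - real (nv (k-1))) / (real (mv (k-1)) - real (mv k))) = - l"
    unfolding l_def A_def[symmetric] B_def[symmetric] gm_def[symmetric] d_def[symmetric]
    using nz1 nz3 by (simp add: field_simps)
  show ?thesis
  proof (intro conjI impI allI)
    fix n :: nat
    assume lt: "real \<delta> < y_intercept (real (nv (k-1)), real (mv (k-1))) (real (nv k), real (mv k))" and n1: "n \<ge> 1"
    have dT: "real \<delta> < T1" using lt yint1 by simp
    define mu where "mu n = l * real (gm * gsum \<delta> d n) + real d ^ n" for n
    have Ri: "Rinv l (mu (Suc m)) (xa \<delta> gm d A (Suc m)) (B * d ^ m) (gm * gsum \<delta> d (Suc m)) (d ^ Suc m) (snd (skew_iter p q (Suc m)))
       \<and> real \<delta> ^ Suc m < mu (Suc m) \<and> l' * mu (Suc m) < l * real \<delta> ^ Suc m" for m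
    proof (induction m)
      case 0
      have R0: "Rinv l (real (\<delta> ^ 0)) 0 1 0 1 (snd (skew_iter p q 0))" using R_zero[of l p q] by simp
      have r: "Rinv l (real (\<delta> ^ 0) * T1) (A * \<delta> ^ 0 + B * 0) (B * 1) (gm * \<delta> ^ 0 + d * 0) (d * 1)
          (bsubst q (fst (skew_iter p q 0)) (snd (skew_iter p q 0)))"
        by (rule edge_step[where q = q, OF l D1[of 0] PA[of 0] R0 _ _ E1 qA qg TA Tg]) auto
      have mu1: "mu 1 = T1" unfolding mu_def using Tg by (simp add: gsum_def)
      have e: "real (\<delta> ^ 0) * T1 = mu (Suc 0)" "A * \<delta> ^ 0 + B * 0 = xa \<delta> gm d A (Suc 0)" "B * 1 = B * d ^ 0"
        "gm * \<delta> ^ 0 + d * 0 = gm * gsum \<delta> d (Suc 0)" "d * 1 = d ^ Suc 0"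
        using mu1 by (simp_all add: gsum_def)
      have n1: "l' * T1 < l * real \<delta>"
      proof -
        have "l * (real d + l' * real gm) \<le> l * real \<delta>" using T2 l by simp
        moreover have "l' * real d < l * real d" using ll dpos by simp
        moreover have "l' * T1 = l' * l * real gm + l' * real d" using Tg[symmetric] by (simp add: algebra_simps)
        ultimately show ?thesis by (simp add: algebra_simps)
      qed
      show ?case using r[unfolded e] dT n1 mu1 unfolding skew_Suc snd_conv by simp
    next
      case (Suc m)
      define n where "n = Suc m"
      have IH: "Rinv l (mu n) (xa \<delta> gm d A n) (B * d ^ m) (gm * gsum \<delta> d n) (d ^ n) (snd (skew_iter p q n))"
        "real \<delta> ^ n < mu n" "l' * mu n < l * real \<delta> ^ n" using Suc unfolding n_def by auto
      have m1: "real (\<delta> ^ n) < mu n" "l' * mu n < l * real (\<delta> ^ n)" using IH by simp_all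
      have r: "Rinv l (real gm * (l * real (\<delta> ^ n)) + real d * mu n) (gm * \<delta> ^ n + d * xa \<delta> gm d A n) (d * (B * d ^ m))
          (gm * \<delta> ^ n + d * (gm * gsum \<delta> d n)) (d * d ^ n) (bsubst q (fst (skew_iter p q n)) (snd (skew_iter p q n)))"
        by (rule vertex_step[where q = q, OF l ll D1[of n] PA[of n] IH(1) m1 E1 E2 qg Tg])
      have muS: "mu (Suc n) = real gm * (l * real (\<delta> ^ n)) + real d * mu n"
        unfolding mu_def gsum_Suc by (simp add: algebra_simps)
      have e: "real gm * (l * real (\<delta> ^ n)) + real d * mu n = mu (Suc n)"
        "gm * \<delta> ^ n + d * xa \<delta> gm d A n = xa \<delta> gm d A (Suc n)" "d * (B * d ^ m) = B * d ^ Suc m"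
        "gm * \<delta> ^ n + d * (gm * gsum \<delta> d n) = gm * gsum \<delta> d (Suc n)" "d * d ^ n = d ^ Suc n"
        using muS unfolding n_def by (simp_all add: gsum_Suc algebra_simps)
      have dpn: "real \<delta> ^ n > 0" using \<delta>_pos by simp
      have a1: "real d * real \<delta> ^ n < real d * mu n" using IH(2) dpos by simp
      have a2: "real \<delta> ^ n * real \<delta> < real \<delta> ^ n * T1" using dT dpn by simp
      have big1: "real \<delta> ^ Suc n < mu (Suc n)"
      proof -
        have "mu (Suc n) = real \<delta> ^ n * (l * real gm) + real d * mu n" using muS by simp
        also have "\<dots> > real \<delta> ^ n * (l * real gm) + real d * real \<delta> ^ n" using a1 by simp
        finally have "mu (Suc n) > real \<delta> ^ n * (l * real gm + real d)" by (simp add: algebra_simps)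
        then have "real \<delta> ^ n * T1 < mu (Suc n)" using Tg by simp
        moreover have "real \<delta> ^ Suc n = real \<delta> ^ n * real \<delta>" by simp
        ultimately show ?thesis using a2 by linarith
      qed
      have big2: "l' * mu (Suc n) < l * real \<delta> ^ Suc n"
      proof -
        have b1: "real d * (l' * mu n) < real d * (l * real \<delta> ^ n)" using IH(3) dpos by simp
        have b2: "l * real \<delta> ^ n * (real d + l' * real gm) \<le> l * real \<delta> ^ n * real \<delta>"
          using T2 l dpn by (intro mult_left_mono) auto
        have "l' * mu (Suc n) = l' * real gm * l * real \<delta> ^ n + real d * (l' * mu n)" using muS by (simp add: algebra_simps)
        also have "\<dots> < l' * real gm * l * real \<delta> ^ n + real d * (l * real \<delta> ^ n)" using b1 by simp
        also have "\<dots> = l * real \<delta> ^ n * (real d + l' * real gm)" by (simp add: algebra_simps)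
        also have "\<dots> \<le> l * real \<delta> ^ Suc n" using b2 by (simp add: algebra_simps)
        finally show ?thesis .
      qed
      show ?case using r[unfolded e] big1 big2 unfolding n_def skew_Suc snd_conv by simp
    qed
    obtain m where nm: "n = Suc m" using n1 by (cases n) auto
    note Rn = Ri[of m]
    have ylt: "d ^ Suc m < B * d ^ m" using o1 dpos by simp
    note fv = final_vertex[OF l conjunct1[OF Rn] ylt]
    have xe: "real (xa \<delta> gm d A (Suc m)) = real (nv k * (\<Sum>i<n. \<delta> ^ (n - 1 - i) * mv k ^ i)) - (real (nv k) - real (nv (k-1))) * real (mv k) ^ (n - 1)"
      using xa_closed[of "Suc m" \<delta> gm d A] unfolding gsum_def gm_def A_def d_def nm by simp
    have ye: "real (B * d ^ m) = real (mv (k-1)) * real (mv k) ^ (n - 1)" unfolding B_def d_def nm by simp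
    have ve: "gm * gsum \<delta> d (Suc m) = nv k * (\<Sum>i<n. \<delta> ^ (n - 1 - i) * mv k ^ i)" "d ^ Suc m = mv k ^ n"
      unfolding gsum_def gm_def d_def nm by simp_all
    have ie: "real \<delta> ^ n < mu (Suc m)" using conjunct1[OF conjunct2[OF Rn]] nm by simp
    show "let Qn = snd (skew_iter p q n);
            \<gamma>n = real (nv k * (\<Sum>i<n. \<delta> ^ (n - 1 - i) * mv k ^ i));
            u = (\<gamma>n - (real (nv k) - real (nv (k-1))) * real (mv k) ^ (n - 1),
                 real (mv (k-1)) * real (mv k) ^ (n - 1));
            v = (\<gamma>n, real (mv k ^ n))
        in preceding_vertex (newton_polygon Qn) u v
           \<and> slope u v = - 1 / ((real (nv k) - real (nv (k-1))) / (real (mv (k-1)) - real (mv k)))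
           \<and> real \<delta> ^ n < y_intercept u v"
      unfolding Let_def slopeeq using fv[unfolded xe ye ve] ie nm by simp
  next
    fix n :: nat
    assume eq: "real \<delta> = y_intercept (real (nv (k-1)), real (mv (k-1))) (real (nv k), real (mv k))" and n1: "n \<ge> 1"
    have dT: "T1 = real \<delta>" using eq yint1 by simp
    have Rii: "Rinv l (real \<delta> ^ n) (gsum \<delta> B n * A) (B ^ n) (gm * gsum \<delta> d n) (d ^ n) (snd (skew_iter p q n))" for n
    proof (induction n)
      case 0 show ?case using R_zero[of l p q] by (simp add: gsum_def)
    next
      case (Suc n)
      have R': "Rinv l (real (\<delta> ^ n)) (gsum \<delta> B n * A) (B ^ n) (gm * gsum \<delta> d n) (d ^ n) (snd (skew_iter p q n))"
        using Suc by simp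
      have y: "B ^ n \<ge> 1" "d ^ n \<ge> 1" using Bpos dpos by simp_all
      have r: "Rinv l (real (\<delta> ^ n) * T1) (A * \<delta> ^ n + B * (gsum \<delta> B n * A)) (B * B ^ n)
          (gm * \<delta> ^ n + d * (gm * gsum \<delta> d n)) (d * d ^ n) (bsubst q (fst (skew_iter p q n)) (snd (skew_iter p q n)))"
        by (rule edge_step[where q = q, OF l D1[of n] PA[of n] R' y E1 qA qg TA Tg])
      have e: "real (\<delta> ^ n) * T1 = real \<delta> ^ Suc n" "A * \<delta> ^ n + B * (gsum \<delta> B n * A) = gsum \<delta> B (Suc n) * A"
        "B * B ^ n = B ^ Suc n" "gm * \<delta> ^ n + d * (gm * gsum \<delta> d n) = gm * gsum \<delta> d (Suc n)" "d * d ^ n = d ^ Suc n"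
        using dT by (simp_all add: gsum_Suc algebra_simps)
      show ?case unfolding skew_Suc snd_conv by (rule r[unfolded e])
    qed
    have ylt: "d ^ n < B ^ n" using o1 n1 by (simp add: power_strict_mono)
    note fv = final_vertex[OF l Rii[of n] ylt]
    have ue: "gsum \<delta> B n * A = (\<Sum>i<n. \<delta> ^ (n - 1 - i) * mv (k-1) ^ i) * nv (k-1)"
      "gm * gsum \<delta> d n = nv k * (\<Sum>i<n. \<delta> ^ (n - 1 - i) * mv k ^ i)" "B ^ n = mv (k-1) ^ n" "d ^ n = mv k ^ n"
      unfolding gsum_def A_def B_def gm_def d_def by simp_all
    show "let Qn = snd (skew_iter p q n);
            \<gamma>n = real (nv k * (\<Sum>i<n. \<delta> ^ (n - 1 - i) * mv k ^ i));
            u = (real ((\<Sum>i<n. \<delta> ^ (n - 1 - i) * mv (k-1) ^ i) * nv (k-1)),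
                 real (mv (k-1) ^ n));
            v = (\<gamma>n, real (mv k ^ n))
        in preceding_vertex (newton_polygon Qn) u v
           \<and> slope u v = - 1 / ((real (nv k) - real (nv (k-1))) / (real (mv (k-1)) - real (mv k)))
           \<and> real \<delta> ^ n = y_intercept u v"
      unfolding Let_def slopeeq using fv[unfolded ue] by simp
  qed
qed


end
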